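(* Let $q$ be a prime power, $G=\mathrm{PGL}_3(q)$ acting on the point set $\mathcal{P}$ of $\mathrm{PG}_2(q)$, and for $\alpha,\beta,\gamma,\delta\in\mathcal{P}$ let $$N_{(\alpha,\beta),(\gamma,\delta)}=|\{g\in G: \alpha^g=\beta,\ \gamma^g=\delta,\ g\text{ is a derangement}\}|.$$ Let $u=(q-2)q(q^2-1)/3$ and $v=(q-1)q(q^2-1)/3$. Then $N_{(\alpha,\beta),(\gamma,\delta)}$ equals: $q^2v$ if $\alpha\neq\beta$, $\alpha=\gamma$ and $\beta=\delta$; $v$ if $\alpha,\beta,\gamma,\delta$ are pairwise distinct and exactly three of them are collinear (i.e. some three are collinear but not all four); $v$ if ($\alpha=\delta$ or $\beta=\gamma$) and $\alpha,\beta,\gamma,\delta$ are not all collinear; $u$ if no three of $\alpha,\beta,\gamma,\delta$ are collinear; $0$ in all other cases.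
   Context: Points of $\mathrm{PG}_2(q)$ are the $1$-dimensional subspaces of $\mathrm{GF}(q)^3$; points are collinear if they lie in a common $2$-dimensional subspace (line). A derangement is an element of $G$ fixing no point. Equivalently, $N=M^TM$ where $M$ is the $\{0,1\}$-matrix with rows indexed by derangements $g$, columns by $(\alpha,\beta)\in\mathcal{P}^2$, and $M_{g,(\alpha,\beta)}=1$ iff $\alpha^g=\beta$. *)

theory Defs
  imports "HOL-Analysis.Analysis"
begin

text \<open>Points of PG(2,q): the 1-dimensional subspaces of GF(q)^3, where the field is
  a finite field of type 'a (so q = CARD('a) is a prime power).\<close>
definition pg_points :: "('a::{finite,field} ^ 3) set set" where
  "pg_points = {{c *s x | c. True} | x. x \<noteq> 0}"

definition pg_collinear :: "('a::{finite,field} ^ 3) set set \<Rightarrow> bool" where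
  "pg_collinear S \<longleftrightarrow> (\<exists>a b. \<forall>p\<in>S. p \<subseteq> {s *s a + t *s b | s t. True})"

definition mat_smult :: "'a::times \<Rightarrow> 'a ^ 3 ^ 3 \<Rightarrow> 'a ^ 3 ^ 3" where
  "mat_smult c A = (\<chi> i j. c * A $ i $ j)"

definition PGL3 :: "('a::{finite,field} ^ 3 ^ 3) set set" where
  "PGL3 = {{mat_smult c A | c. c \<noteq> 0} | A. invertible A}"

definition pgl_act :: "('a::{finite,field} ^ 3) set \<Rightarrow> ('a ^ 3 ^ 3) set \<Rightarrow> ('a ^ 3) set" where
  "pgl_act \<alpha> g = (\<lambda>x. x v* (SOME A. A \<in> g)) ` \<alpha>"

definition derangement :: "('a::{finite,field} ^ 3 ^ 3) set \<Rightarrow> bool" where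
  "derangement g \<longleftrightarrow> (\<forall>\<alpha>\<in>pg_points. pgl_act \<alpha> g \<noteq> \<alpha>)"

definition Ncount :: "('a::{finite,field} ^ 3) set \<Rightarrow> ('a ^ 3) set \<Rightarrow> ('a ^ 3) set \<Rightarrow> ('a ^ 3) set \<Rightarrow> nat" where
  "Ncount \<alpha> \<beta> \<gamma> \<delta> = card {g \<in> PGL3. pgl_act \<alpha> g = \<beta> \<and> pgl_act \<gamma> g = \<delta> \<and> derangement g}"

end

theory Submission
  imports Defs
begin

definition cub :: "'a::field \<times> 'a \<times> 'a \<Rightarrow> 'a \<Rightarrow> 'a" where
  "cub c l = l^3 + snd (snd c) * l^2 + fst (snd c) * l + fst c"

definition rootsc :: "'a::field \<times> 'a \<times> 'a \<Rightarrow> 'a set" where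
  "rootsc c = {l. cub c l = 0}"

lemma cub_diff: "cub (c0,c1,c2) l - cub (c0,c1,c2) m = (l - m) * (l^2 + l*m + m^2 + c2*(l+m) + c1)"
  by (simp add: cub_def power2_eq_square power3_eq_cube algebra_simps)

lemma two_roots:
  fixes l m :: "'a::field"
  assumes "l \<noteq> m" "cub (c0,c1,c2) l = 0" "cub (c0,c1,c2) m = 0"
  shows "c1 = -(l^2 + l*m + m^2) - c2*(l+m)" "c0 = -(l^3 + c2*l^2 + c1*l)"
proof -
  have "(l - m) * (l^2 + l*m + m^2 + c2*(l+m) + c1) = 0" using cub_diff[of c0 c1 c2 l m] assms by simp
  hence "l^2 + l*m + m^2 + c2*(l+m) + c1 = 0" using assms(1) by simp
  thus "c1 = -(l^2 + l*m + m^2) - c2*(l+m)" by (simp add: algebra_simps eq_neg_iff_add_eq_0)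
  show "c0 = -(l^3 + c2*l^2 + c1*l)" using assms(2) by (simp add: cub_def algebra_simps eq_neg_iff_add_eq_0)
qed

lemma three_roots:
  fixes l m n :: "'a::field"
  assumes "l \<noteq> m" "l \<noteq> n" "m \<noteq> n" "cub (c0,c1,c2) l = 0" "cub (c0,c1,c2) m = 0" "cub (c0,c1,c2) n = 0"
  shows "c2 = -(l+m+n)" "c1 = l*m + l*n + m*n" "c0 = - (l*m*n)"
proof -
  have a: "c1 = -(l^2 + l*m + m^2) - c2*(l+m)" "c0 = -(l^3 + c2*l^2 + c1*l)"
    using two_roots[OF assms(1,4,5)] by auto
  have b: "c1 = -(l^2 + l*n + n^2) - c2*(l+n)"
    using two_roots[OF assms(2,4,6)] by auto
  have "(m - n) * (l + m + n + c2) = 0" using a b by (simp add: power2_eq_square algebra_simps)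
  hence "l + m + n + c2 = 0" using assms(3) by simp
  thus c2: "c2 = -(l+m+n)" by (simp add: algebra_simps eq_neg_iff_add_eq_0)
  show c1: "c1 = l*m + l*n + m*n" using a(1) c2 by (simp add: power2_eq_square algebra_simps)
  show "c0 = - (l*m*n)" using a(2) c2 c1 by (simp add: power2_eq_square power3_eq_cube algebra_simps)
qed

lemma card_roots_le3: "card (rootsc (c::'a::{field,finite}\<times>'a\<times>'a)) \<le> 3"
proof (rule ccontr)
  assume "\<not> ?thesis"
  hence "4 \<le> card (rootsc c)" by simp
  then obtain T where T: "T \<subseteq> rootsc c" "card T = Suc 3" by (metis obtain_subset_with_card_n numeral_eq_Suc pred_numeral_simps(2) semiring_norm(26) semiring_norm(27))
  then obtain w T' where w: "T = insert w T'" "w \<notin> T'" "card T' = 3" by (metis card_Suc_eq)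
  then obtain l m n where lmn: "T' = {l,m,n}" "l \<noteq> m" "m \<noteq> n" "l \<noteq> n" by (metis card_3_iff)
  obtain c0 c1 c2 where c: "c = (c0,c1,c2)" by (metis prod.exhaust)
  have r: "cub c l = 0" "cub c m = 0" "cub c n = 0" "cub c w = 0" using T w lmn by (auto simp: rootsc_def)
  have "c2 = -(l+m+n)" using three_roots[of l m n c0 c1 c2] r lmn c by auto
  moreover have "c2 = -(l+m+w)" using three_roots[of l m w c0 c1 c2] r lmn w c by auto
  ultimately have "n = w" by simp
  thus False using w lmn by auto
qed

lemma card_offdiag: "finite S \<Longrightarrow> card {(l,m). l \<in> S \<and> m \<in> S \<and> l \<noteq> m} = card S * (card S - 1)"
proof -
  assume f: "finite S"
  have "{(l,m). l \<in> S \<and> m \<in> S \<and> l \<noteq> m} = Sigma S (\<lambda>l. S - {l})" by auto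
  moreover have "card (Sigma S (\<lambda>l. S - {l})) = card S * (card S - 1)"
    using f by (simp add: card_Diff_singleton)
  ultimately show ?thesis by simp
qed

lemma card_offdiag3: "finite S \<Longrightarrow> card {(l,m,n). l \<in> S \<and> m \<in> S \<and> n \<in> S \<and> l \<noteq> m \<and> l \<noteq> n \<and> m \<noteq> n} = card S * (card S - 1) * (card S - 2)"
proof -
  assume f: "finite S"
  have "{(l,m,n). l \<in> S \<and> m \<in> S \<and> n \<in> S \<and> l \<noteq> m \<and> l \<noteq> n \<and> m \<noteq> n} = Sigma S (\<lambda>l. Sigma (S - {l}) (\<lambda>m. S - {l,m}))" by auto
  moreover have "card (Sigma S (\<lambda>l. Sigma (S - {l}) (\<lambda>m. S - {l,m}))) = card S * (card S - 1) * (card S - 2)"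
  proof -
    have "\<forall>l\<in>S. card (Sigma (S - {l}) (\<lambda>m. S - {l,m})) = (card S - 1) * (card S - 2)"
    proof
      fix l assume l: "l \<in> S"
      have "\<forall>m\<in>S - {l}. card (S - {l,m}) = card S - 2"
      proof
        fix m assume m: "m \<in> S - {l}"
        hence "card {l,m} = 2" by auto
        moreover have "{l,m} \<subseteq> S" using m l by auto
        ultimately show "card (S - {l,m}) = card S - 2" using f by (simp add: card_Diff_subset)
      qed
      thus "card (Sigma (S - {l}) (\<lambda>m. S - {l,m})) = (card S - 1) * (card S - 2)"
        using f l by (simp add: card_Diff_singleton)
    qed
    thus ?thesis using f by simp
  qed
  ultimately show ?thesis by simp
qed

lemma card_UNIV3: "card (UNIV :: ('a::finite \<times> 'a \<times> 'a) set) = CARD('a)^3"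
  by (simp add: UNIV_Times_UNIV[symmetric] card_cartesian_product del: UNIV_Times_UNIV) (simp add: power3_eq_cube)

lemma card_P1: "card {(c, l::'a::{field,finite}). cub c l = 0} = CARD('a)^3"
proof -
  define f where "f = (\<lambda>(l::'a,c1::'a,c2::'a). ((-(l^3 + c2*l^2 + c1*l), c1, c2), l))"
  have "{(c, l::'a). cub c l = 0} = f ` UNIV"
  proof
    show "{(c, l::'a). cub c l = 0} \<subseteq> f ` UNIV"
    proof clarify
      fix c0 c1 c2 l assume "cub (c0,c1,c2) (l::'a) = 0"
      hence "c0 = -(l^3 + c2*l^2 + c1*l)" by (simp add: cub_def algebra_simps eq_neg_iff_add_eq_0)
      thus "((c0,c1,c2),l) \<in> range f" unfolding f_def by (auto intro!: image_eqI[where x="(l,c1,c2)"])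
    qed
    show "f ` UNIV \<subseteq> {(c, l::'a). cub c l = 0}" unfolding f_def by (auto simp: cub_def)
  qed
  moreover have "inj f" unfolding f_def inj_def by auto
  ultimately show ?thesis by (simp add: card_image card_UNIV3 power3_eq_cube)
qed

definition od2 :: "'b set \<Rightarrow> ('b \<times> 'b) set" where
  "od2 S = {(l,m). l \<in> S \<and> m \<in> S \<and> l \<noteq> m}"
definition od3 :: "'b set \<Rightarrow> ('b \<times> 'b \<times> 'b) set" where
  "od3 S = {(l,m,n). l \<in> S \<and> m \<in> S \<and> n \<in> S \<and> l \<noteq> m \<and> l \<noteq> n \<and> m \<noteq> n}"

lemma card_od2: "finite S \<Longrightarrow> card (od2 S) = card S * (card S - 1)"
  unfolding od2_def by (rule card_offdiag)
lemma card_od3: "finite S \<Longrightarrow> card (od3 S) = card S * (card S - 1) * (card S - 2)"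
  unfolding od3_def by (rule card_offdiag3)

lemma card_P2: "card (Sigma UNIV (\<lambda>c. od2 (rootsc (c::'a::{field,finite}\<times>'a\<times>'a)))) = CARD('a) * (CARD('a) - 1) * CARD('a)"
proof -
  define f where "f = (\<lambda>((l::'a,m::'a),c2::'a). ((-(l^3 + c2*l^2 + (-(l^2 + l*m + m^2) - c2*(l+m))*l), -(l^2 + l*m + m^2) - c2*(l+m), c2), l, m))"
  define D where "D = od2 (UNIV::'a set) \<times> (UNIV::'a set)"
  have "Sigma UNIV (\<lambda>c. od2 (rootsc c)) = f ` D"
  proof
    show "Sigma UNIV (\<lambda>c. od2 (rootsc c)) \<subseteq> f ` D"
    proof clarify
      fix c0 c1 c2 l m assume "(l,m) \<in> od2 (rootsc (c0,c1,c2::'a))"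
      hence h: "l \<noteq> m" "cub (c0,c1,c2) (l::'a) = 0" "cub (c0,c1,c2) m = 0" by (auto simp: od2_def rootsc_def)
      note e = two_roots[OF h]
      show "((c0,c1,c2),l,m) \<in> f ` D" unfolding f_def D_def
        by (rule image_eqI[where x="((l,m),c2)"]) (use e h in \<open>auto simp: od2_def\<close>)
    qed
    show "f ` D \<subseteq> Sigma UNIV (\<lambda>c. od2 (rootsc c))"
    proof
      fix y assume "y \<in> f ` D"
      then obtain l m c2 where x: "y = f ((l,m),c2)" "l \<noteq> m" unfolding D_def od2_def by auto
      have "cub (-(l^3 + c2*l^2 + (-(l^2 + l*m + m^2) - c2*(l+m))*l), -(l^2 + l*m + m^2) - c2*(l+m), c2) m = 0"
        unfolding cub_def by (simp add: power2_eq_square power3_eq_cube algebra_simps)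
      moreover have "cub (-(l^3 + c2*l^2 + (-(l^2 + l*m + m^2) - c2*(l+m))*l), -(l^2 + l*m + m^2) - c2*(l+m), c2) l = 0"
        unfolding cub_def by (simp add: power2_eq_square power3_eq_cube algebra_simps)
      ultimately show "y \<in> Sigma UNIV (\<lambda>c. od2 (rootsc c))" using x unfolding f_def od2_def rootsc_def by auto
    qed
  qed
  moreover have "inj_on f D" unfolding f_def inj_on_def by auto
  moreover have "card D = CARD('a) * (CARD('a) - 1) * CARD('a)"
    unfolding D_def card_cartesian_product using card_od2[of "UNIV::'a set"] by simp
  ultimately show ?thesis by (simp add: card_image)
qed

lemma card_P3: "card (Sigma UNIV (\<lambda>c. od3 (rootsc (c::'a::{field,finite}\<times>'a\<times>'a)))) = CARD('a) * (CARD('a) - 1) * (CARD('a) - 2)"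
proof -
  define f where "f = (\<lambda>(l::'a,m::'a,n::'a). ((-(l*m*n), l*m + l*n + m*n, -(l+m+n)), l, m, n))"
  define D where "D = od3 (UNIV::'a set)"
  have cf: "cub (-(l*m*n), l*m + l*n + m*n, -(l+m+n)) x = (x - l) * (x - m) * (x - n)" for l m n x :: 'a
    unfolding cub_def by (simp add: power2_eq_square power3_eq_cube algebra_simps)
  have "Sigma UNIV (\<lambda>c. od3 (rootsc c)) = f ` D"
  proof
    show "Sigma UNIV (\<lambda>c. od3 (rootsc c)) \<subseteq> f ` D"
    proof clarify
      fix c0 c1 c2 l m n assume "(l,m,n) \<in> od3 (rootsc (c0,c1,c2::'a))"
      hence h: "l \<noteq> m" "l \<noteq> n" "m \<noteq> n" "cub (c0,c1,c2) (l::'a) = 0" "cub (c0,c1,c2) m = 0" "cub (c0,c1,c2) n = 0"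
        by (auto simp: od3_def rootsc_def)
      note e = three_roots[OF h]
      show "((c0,c1,c2),l,m,n) \<in> f ` D" unfolding f_def D_def
        by (rule image_eqI[where x="(l,m,n)"]) (use e h in \<open>auto simp: od3_def\<close>)
    qed
    show "f ` D \<subseteq> Sigma UNIV (\<lambda>c. od3 (rootsc c))"
      unfolding D_def f_def od3_def rootsc_def using cf by auto
  qed
  moreover have "inj_on f D" unfolding f_def inj_on_def D_def by auto
  moreover have "card D = CARD('a) * (CARD('a) - 1) * (CARD('a) - 2)"
    unfolding D_def using card_od3[of "UNIV::'a set"] by simp
  ultimately show ?thesis by (simp add: card_image)
qed

definition rootfree :: "('a::field \<times> 'a \<times> 'a) set" where
  "rootfree = {c. \<forall>l. cub c l \<noteq> 0}"

lemma k_ident: "k \<le> (3::nat) \<Longrightarrow> 6 * (if k = 0 then 0 else 1) + 3 * (k * (k - 1)) = 6 * k + k * (k - 1) * (k - 2)"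
  by (cases k; cases "k - 1"; cases "k - 2"; auto)

lemma card_rootfree: "3 * card (rootfree :: ('a::{field,finite} \<times> 'a \<times> 'a) set) = CARD('a)^3 - CARD('a)"
proof -
  let ?q = "CARD('a)"
  let ?R = "rootsc :: 'a \<times> 'a \<times> 'a \<Rightarrow> 'a set"
  have s1: "(\<Sum>c\<in>UNIV. card (?R c)) = ?q^3"
  proof -
    have "{(c, l::'a). cub c l = 0} = Sigma UNIV ?R" by (auto simp: rootsc_def)
    thus ?thesis using card_P1[where 'a='a] by simp
  qed
  have s2: "(\<Sum>c\<in>UNIV. card (?R c) * (card (?R c) - 1)) = ?q * (?q - 1) * ?q"
    using card_P2[where 'a='a] by (simp add: card_od2)
  have s3: "(\<Sum>c\<in>UNIV. card (?R c) * (card (?R c) - 1) * (card (?R c) - 2)) = ?q * (?q - 1) * (?q - 2)"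
    using card_P3[where 'a='a] by (simp add: card_od3)
  have "(\<Sum>c\<in>UNIV. 6 * (if card (?R c) = 0 then 0 else 1) + 3 * (card (?R c) * (card (?R c) - 1)))
      = (\<Sum>c\<in>UNIV. 6 * card (?R c) + card (?R c) * (card (?R c) - 1) * (card (?R c) - 2))"
    by (rule sum.cong[OF refl]) (rule k_ident[OF card_roots_le3])
  hence e: "6 * (\<Sum>c\<in>UNIV. (if card (?R c) = 0 then 0 else 1)) + 3 * (?q * (?q - 1) * ?q) = 6 * ?q^3 + ?q * (?q - 1) * (?q - 2)"
    using s1 s2 s3 by (simp add: sum.distrib sum_distrib_left[symmetric])
  have "(\<Sum>c\<in>UNIV. (if card (?R c) = 0 then 0 else 1::nat)) = card {c. ?R c \<noteq> {}}"
    by (simp add: sum.If_cases card_eq_0_iff Compl_eq Collect_neg_eq[symmetric])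
  moreover have "card {c. ?R c \<noteq> {}} + card (rootfree::('a\<times>'a\<times>'a) set) = ?q^3"
  proof -
    have "rootfree = UNIV - {c. ?R c \<noteq> {}}" by (auto simp: rootfree_def rootsc_def)
    hence "card (rootfree::('a\<times>'a\<times>'a) set) = card (UNIV::('a\<times>'a\<times>'a) set) - card {c. ?R c \<noteq> {}}"
      by (metis card_Diff_subset finite subset_UNIV)
    hence "card (rootfree::('a\<times>'a\<times>'a) set) = ?q^3 - card {c. ?R c \<noteq> {}}"
      by (simp add: card_UNIV3 power3_eq_cube)
    moreover have "card {c. ?R c \<noteq> {}} \<le> ?q^3" using card_UNIV3[where 'a='a] by (metis card_mono finite subset_UNIV)
    ultimately show ?thesis by simp
  qed
  ultimately have e2: "6 * (?q^3 - card (rootfree::('a\<times>'a\<times>'a) set)) + 3 * (?q * (?q - 1) * ?q) = 6 * ?q^3 + ?q * (?q - 1) * (?q - 2)"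
    "card (rootfree::('a\<times>'a\<times>'a) set) \<le> ?q^3"
    using e by (auto simp: algebra_simps)
  have q2: "?q \<ge> 2"
  proof -
    have "{0::'a, 1} \<subseteq> UNIV" by simp
    hence "card {0::'a,1} \<le> ?q" by (metis card_mono finite)
    thus ?thesis by simp
  qed
  define r where "r = card (rootfree::('a\<times>'a\<times>'a) set)"
  have "int (6 * (?q^3 - r) + 3 * (?q * (?q - 1) * ?q)) = int (6 * ?q^3 + ?q * (?q - 1) * (?q - 2))"
    using e2 r_def by simp
  hence "6 * (int ?q^3 - int r) + 3 * (int ?q * (int ?q - 1) * int ?q) = 6 * int ?q^3 + int ?q * (int ?q - 1) * (int ?q - 2)"
    using e2(2) q2 r_def by (simp add: of_nat_diff)
  hence "3 * int r = int ?q ^3 - int ?q" by (simp add: algebra_simps power3_eq_cube)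
  moreover have "?q \<le> ?q^3" using q2 by (simp add: power3_eq_cube)
  ultimately have "int (3 * r) = int (?q^3 - ?q)" by (simp add: of_nat_diff)
  thus ?thesis unfolding r_def by (simp only: of_nat_eq_iff)
qed

definition noeig :: "'a::field^3^3 \<Rightarrow> bool" where
  "noeig A \<longleftrightarrow> (\<forall>x l. x \<noteq> 0 \<longrightarrow> x v* A \<noteq> l *s x)"

definition Mset :: "'a::field^3 \<Rightarrow> 'a^3 \<Rightarrow> 'a^3 \<Rightarrow> 'a^3 \<Rightarrow> ('a^3^3) set" where
  "Mset a b c d = {A. noeig A \<and> (\<exists>k. a v* A = k *s b) \<and> (\<exists>k. c v* A = k *s d)}"

lemma kernel_det0:
  fixes M :: "'a::field^'n^'n"
  assumes "det M = 0"
  shows "\<exists>x. x \<noteq> 0 \<and> x v* M = 0"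
proof -
  have "det (transpose M) = 0" using assms by simp
  hence "\<not> invertible (transpose M)" by (simp add: invertible_det_nz)
  hence "\<not> (\<exists>B. B ** transpose M = mat 1)" by (simp add: invertible_left_inverse)
  hence "\<not> (\<forall>x. transpose M *v x = 0 \<longrightarrow> x = 0)" by (simp add: matrix_left_invertible_ker)
  thus ?thesis by auto
qed

lemma vm_mat: "(x::'a::field^'n) v* mat l = l *s x"
  by (simp add: vec_eq_iff vector_matrix_mult_def mat_def if_distrib mult.commute cong: if_cong)

lemma vm_diff_right: "(x::'a::field^'n) v* (A - B) = x v* A - x v* B"
  by (simp add: vec_eq_iff vector_matrix_mult_def sum_subtractf algebra_simps)

lemma noeig_det: "noeig (A::'a::field^3^3) \<longleftrightarrow> (\<forall>l. det (mat l - A) \<noteq> 0)"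
proof
  assume n: "noeig A"
  show "\<forall>l. det (mat l - A) \<noteq> 0"
  proof (rule ccontr)
    assume "\<not> ?thesis"
    then obtain l where "det (mat l - A) = 0" by auto
    then obtain x where x: "x \<noteq> 0" "x v* (mat l - A) = 0" using kernel_det0 by blast
    hence "l *s x - x v* A = 0" by (simp add: vm_diff_right vm_mat)
    hence "x v* A = l *s x" by simp
    thus False using n x unfolding noeig_def by auto
  qed
next
  assume d: "\<forall>l. det (mat l - A) \<noteq> 0"
  show "noeig A" unfolding noeig_def
  proof (intro allI impI notI)
    fix x l assume x: "(x::'a^3) \<noteq> 0" "x v* A = l *s x"
    have "x v* (mat l - A) = 0" using x by (simp add: vm_diff_right vm_mat)
    moreover have "invertible (mat l - A)" using d by (simp add: invertible_det_nz)
    then obtain B where "(mat l - A) ** B = mat 1" by (auto simp: invertible_right_inverse)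
    ultimately have "x v* mat 1 = 0" by (metis vector_matrix_mul_assoc vector_matrix_mult_0)
    thus False using x by simp
  qed
qed

lemma noeig_invertible: "noeig A \<Longrightarrow> invertible (A::'a::field^3^3)"
proof (rule ccontr)
  assume n: "noeig A" and "\<not> invertible A"
  hence "det A = 0" by (simp add: invertible_det_nz)
  then obtain x where "x \<noteq> 0" "x v* A = 0" using kernel_det0 by blast
  thus False using n unfolding noeig_def by (metis vector_smult_lzero)
qed

lemma noeig_nz: "noeig A \<Longrightarrow> x \<noteq> 0 \<Longrightarrow> x v* A \<noteq> 0"
  unfolding noeig_def by (metis vector_smult_lzero)

lemma noeig_conj:
  fixes P Q B :: "'a::field^3^3"
  assumes "noeig B" "P ** Q = mat 1" "Q ** P = mat 1"
  shows "noeig (P ** B ** Q)"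
  unfolding noeig_def
proof (intro allI impI notI)
  fix v l assume v: "(v::'a^3) \<noteq> 0" "v v* (P ** B ** Q) = l *s v"
  define u where "u = v v* P"
  have "u \<noteq> 0"
  proof
    assume "u = 0"
    hence "v v* (P ** Q) = 0" unfolding u_def by (metis vector_matrix_mul_assoc vector_matrix_mult_0)
    thus False using v assms by simp
  qed
  moreover have "u v* B = l *s u"
  proof -
    have "(v v* (P ** B ** Q)) v* P = (l *s v) v* P" using v by simp
    hence "v v* (P ** B ** (Q ** P)) = l *s (v v* P)"
      by (simp add: vector_matrix_mul_assoc matrix_mul_assoc scalar_vector_matrix_assoc)
    hence "v v* (P ** B) = l *s (v v* P)" using assms by simp
    thus ?thesis unfolding u_def by (simp add: vector_matrix_mul_assoc)
  qed
  ultimately show False using assms(1) unfolding noeig_def by auto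
qed

lemma prop_conj:
  fixes P Q B :: "'a::field^3^3"
  assumes "Q ** P = mat 1" "\<exists>k. x v* B = k *s y"
  shows "\<exists>k. (x v* Q) v* (P ** B ** Q) = k *s (y v* Q)"
proof -
  obtain k where k: "x v* B = k *s y" using assms by auto
  have "(x v* Q) v* (P ** B ** Q) = x v* ((Q ** P) ** B ** Q)"
    by (simp add: vector_matrix_mul_assoc matrix_mul_assoc)
  also have "\<dots> = (x v* B) v* Q" using assms by (simp add: vector_matrix_mul_assoc)
  also have "\<dots> = k *s (y v* Q)" using k by (simp add: scalar_vector_matrix_assoc)
  finally show ?thesis by auto
qed

lemma card_Mset_conj:
  fixes P Q :: "'a::{field,finite}^3^3"
  assumes PQ: "P ** Q = mat 1" and QP: "Q ** P = mat 1"
  shows "card (Mset x y z w) = card (Mset (x v* Q) (y v* Q) (z v* Q) (w v* Q))"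
proof -
  have inv: "x' v* Q v* P = x'" for x' :: "'a^3"
    using QP by (simp add: vector_matrix_mul_assoc)
  have "bij_betw (\<lambda>B. P ** B ** Q) (Mset x y z w) (Mset (x v* Q) (y v* Q) (z v* Q) (w v* Q))"
  proof (rule bij_betw_byWitness[where f'="\<lambda>A. Q ** A ** P"])
    show "\<forall>a\<in>Mset x y z w. Q ** (P ** a ** Q) ** P = a"
      using PQ QP by (simp add: matrix_mul_assoc) (metis matrix_mul_assoc matrix_mul_lid matrix_mul_rid)
    show "\<forall>a\<in>Mset (x v* Q) (y v* Q) (z v* Q) (w v* Q). P ** (Q ** a ** P) ** Q = a"
      using PQ QP by (simp add: matrix_mul_assoc) (metis matrix_mul_assoc matrix_mul_lid matrix_mul_rid)
    show "(\<lambda>B. P ** B ** Q) ` Mset x y z w \<subseteq> Mset (x v* Q) (y v* Q) (z v* Q) (w v* Q)"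
      unfolding Mset_def using noeig_conj[OF _ PQ QP] prop_conj[OF QP] by auto
    show "(\<lambda>A. Q ** A ** P) ` Mset (x v* Q) (y v* Q) (z v* Q) (w v* Q) \<subseteq> Mset x y z w"
    proof
      fix B assume "B \<in> (\<lambda>A. Q ** A ** P) ` Mset (x v* Q) (y v* Q) (z v* Q) (w v* Q)"
      then obtain A where A: "A \<in> Mset (x v* Q) (y v* Q) (z v* Q) (w v* Q)" "B = Q ** A ** P" by auto
      have "noeig B" using A noeig_conj[OF _ QP PQ] unfolding Mset_def by auto
      moreover have "\<exists>k. x v* B = k *s y" using A prop_conj[OF PQ, of "x v* Q" A "y v* Q"] inv unfolding Mset_def by auto
      moreover have "\<exists>k. z v* B = k *s w" using A prop_conj[OF PQ, of "z v* Q" A "w v* Q"] inv unfolding Mset_def by auto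
      ultimately show "B \<in> Mset x y z w" unfolding Mset_def by auto
    qed
  qed
  thus ?thesis by (rule bij_betw_same_card)
qed

lemma prop_scale_l: "(k::'a::field) \<noteq> 0 \<Longrightarrow> (\<exists>m. (k *s a) v* A = m *s b) \<longleftrightarrow> (\<exists>m. a v* A = m *s b)"
proof
  assume "k \<noteq> 0" "\<exists>m. (k *s a) v* A = m *s b"
  then obtain m where "k *s (a v* A) = m *s b" by (auto simp: scalar_vector_matrix_assoc)
  hence "(inverse k) *s (k *s (a v* A)) = (inverse k * m) *s b" by simp
  thus "\<exists>m. a v* A = m *s b" using \<open>k \<noteq> 0\<close> by (auto simp del: vector_sneg_minus1)
next
  assume "k \<noteq> 0" "\<exists>m. a v* A = m *s b"
  then obtain m where "a v* A = m *s b" by auto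
  thus "\<exists>m. (k *s a) v* A = m *s b" by (auto simp: scalar_vector_matrix_assoc intro!: exI[where x="k*m"])
qed

lemma prop_scale_r: "(k::'a::field) \<noteq> 0 \<Longrightarrow> (\<exists>m. a v* A = m *s (k *s b)) \<longleftrightarrow> (\<exists>m. a v* A = m *s b)"
proof
  assume "k \<noteq> 0" "\<exists>m. a v* A = m *s (k *s b)"
  thus "\<exists>m. a v* A = m *s b" by auto
next
  assume k: "k \<noteq> 0" "\<exists>m. a v* A = m *s b"
  then obtain m where "a v* A = m *s b" by auto
  hence "a v* A = (m / k) *s (k *s b)" using k by simp
  thus "\<exists>m. a v* A = m *s (k *s b)" by blast
qed

lemma Mset_scale:
  assumes "k1 \<noteq> 0" "k2 \<noteq> 0" "k3 \<noteq> 0" "k4 \<noteq> 0"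
  shows "Mset (k1 *s a) (k2 *s b) (k3 *s c) (k4 *s (d::'a::field^3)) = Mset a b c d"
proof -
  have "\<And>A. (\<exists>m. (k1 *s a) v* A = m *s (k2 *s b)) \<longleftrightarrow> (\<exists>m. a v* A = m *s b)"
    using prop_scale_l[OF assms(1)] prop_scale_r[OF assms(2)] by blast
  moreover have "\<And>A. (\<exists>m. (k3 *s c) v* A = m *s (k4 *s d)) \<longleftrightarrow> (\<exists>m. c v* A = m *s d)"
    using prop_scale_l[OF assms(3)] prop_scale_r[OF assms(4)] by blast
  ultimately show ?thesis unfolding Mset_def by auto
qed

definition rows3 :: "'a::field^3 \<Rightarrow> 'a^3 \<Rightarrow> 'a^3 \<Rightarrow> 'a^3^3" where
  "rows3 a b c = vector [a,b,c]"

lemma vm_rows3: "(x::'a::field^3) v* rows3 a b c = x$1 *s a + x$2 *s b + x$3 *s c"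
  by (simp add: rows3_def vec_eq_iff vector_matrix_mult_def sum_3 mult.commute)

abbreviation "v3 x y z \<equiv> (vector [x,y,z] :: 'a::field^3)"

lemma vm_rows3_v3 [simp]: "v3 x y z v* rows3 a b c = x *s a + y *s b + z *s c"
  by (simp add: vm_rows3)

lemma det_rows3: "det (rows3 a b c) = a$1*b$2*c$3 + a$2*b$3*c$1 + a$3*b$1*c$2 - a$1*b$3*c$2 - a$2*b$1*c$3 - a$3*b$2*c$1"
  by (simp add: rows3_def det_3)

lemma count_scheme:
  fixes \<phi> :: "'p \<Rightarrow> ('a::{field,finite}\<times>'a\<times>'a) \<Rightarrow> ('a\<times>'a\<times>'a)"
  assumes "finite Fix" "\<And>f. f \<in> Fix \<Longrightarrow> bij (\<phi> f)"
  shows "card {(f,y). f \<in> Fix \<and> \<phi> f y \<in> rootfree} = card Fix * card (rootfree::('a\<times>'a\<times>'a) set)"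
proof -
  have "{(f,y). f \<in> Fix \<and> \<phi> f y \<in> rootfree} = Sigma Fix (\<lambda>f. \<phi> f -` rootfree)" by auto
  moreover have "\<forall>f\<in>Fix. card (\<phi> f -` rootfree) = card (rootfree::('a\<times>'a\<times>'a) set)"
  proof
    fix f assume f: "f \<in> Fix"
    have "\<phi> f ` (\<phi> f -` rootfree) = rootfree" using assms(2)[OF f] by (simp add: bij_def surj_image_vimage_eq)
    moreover have "inj_on (\<phi> f) (\<phi> f -` rootfree)" using assms(2)[OF f] by (meson bij_def inj_on_subset subset_UNIV)
    ultimately show "card (\<phi> f -` rootfree) = card (rootfree::('a\<times>'a\<times>'a) set)" by (metis card_image)
  qed
  ultimately show ?thesis using assms(1) by simp
qed

lemma vm_rows_gen: "(v3 x y z) v* (A::'a::field^3^3) = x *s A$1 + y *s A$2 + z *s A$3"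
  by (simp add: vec_eq_iff vector_matrix_mult_def sum_3 mult.commute)

lemma e1A: "(v3 1 0 0) v* (A::'a::field^3^3) = A$1" by (simp add: vm_rows_gen)
lemma e2A: "(v3 0 1 0) v* (A::'a::field^3^3) = A$2" by (simp add: vm_rows_gen)
lemma e3A: "(v3 0 0 1) v* (A::'a::field^3^3) = A$3" by (simp add: vm_rows_gen)

lemma v3_eq: "((v::'a::field^3) = v3 x y z) \<longleftrightarrow> v$1 = x \<and> v$2 = y \<and> v$3 = z"
  by (auto simp: vec_eq_iff forall_3)

lemma v3_zero[simp]: "(v3 x y z = 0) \<longleftrightarrow> x = 0 \<and> y = 0 \<and> (z::'a::field) = 0"
  by (auto simp: vec_eq_iff forall_3)

lemma mat_eq3: "(A::'a::field^3^3) = B \<longleftrightarrow> (\<forall>i j. A$i$j = B$i$j)"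
  by (auto simp: vec_eq_iff)

lemma rows3_idx[simp]: "rows3 a b c $ 1 = a" "rows3 a b c $ 2 = b" "rows3 a b c $ 3 = c"
  by (simp_all add: rows3_def)

lemma mat_idx: "(mat l :: 'a::field^3^3) $ i $ j = (if i = j then l else 0)"
  by (simp add: mat_def)

lemma det_ml: "det (mat l - (A::'a::field^3^3)) =
    (l - A$1$1) * (l - A$2$2) * (l - A$3$3) +
    (- A$1$2) * (- A$2$3) * (- A$3$1) +
    (- A$1$3) * (- A$2$1) * (- A$3$2) -
    (l - A$1$1) * (- A$2$3) * (- A$3$2) -
    (- A$1$2) * (- A$2$1) * (l - A$3$3) -
    (- A$1$3) * (l - A$2$2) * (- A$3$1)"
  by (simp add: det_3 mat_idx)

lemma smult_v3: "k *s v3 x y z = v3 (k*x) (k*y) (k*(z::'a::field))"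
  by (simp add: vec_eq_iff forall_3)

lemma add_v3: "v3 x y z + v3 x' y' z' = v3 (x+x') (y+y') (z+(z'::'a::field))"
  by (simp add: vec_eq_iff forall_3)

lemma NF_chain:
  "card (Mset (v3 0 1 0) (v3 0 0 1) (v3 1 0 0) (v3 0 1 0) :: ('a::{field,finite}^3^3) set)
    = (CARD('a) - 1)^2 * card (rootfree::('a\<times>'a\<times>'a) set)"
proof -
  define Fix where "Fix = {(s::'a,t::'a). s \<noteq> 0 \<and> t \<noteq> 0}"
  define \<phi> where "\<phi> = (\<lambda>(s::'a,t::'a) (x::'a,y::'a,z::'a). (-(s*t*x), -(t*y), -z))"
  define h where "h = (\<lambda>((s::'a,t::'a),(x::'a,y::'a,z::'a)). rows3 (v3 0 s 0) (v3 0 0 t) (v3 x y z))"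
  define g where "g = (\<lambda>A::'a^3^3. ((A$1$2, A$2$3), (A$3$1, A$3$2, A$3$3)))"
  define T where "T = {(f,y). f \<in> Fix \<and> \<phi> f y \<in> rootfree}"
  have cp: "det (mat l - h p) = cub (\<phi> (fst p) (snd p)) l" for p l
    unfolding h_def \<phi>_def cub_def
    by (cases p) (auto simp: det_ml power2_eq_square power3_eq_cube algebra_simps)
  have "bij_betw g (Mset (v3 0 1 0) (v3 0 0 1) (v3 1 0 0) (v3 0 1 0)) T"
  proof (rule bij_betw_byWitness[where f'=h])
    show "\<forall>A\<in>Mset (v3 0 1 0) (v3 0 0 1) (v3 1 0 0) (v3 0 1 0). h (g A) = A"
    proof
      fix A :: "'a^3^3" assume "A \<in> Mset (v3 0 1 0) (v3 0 0 1) (v3 1 0 0) (v3 0 1 0)"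
      then obtain k k' where "A$2 = k *s v3 0 0 1" "A$1 = k' *s v3 0 1 0" unfolding Mset_def by (auto simp: e1A e2A)
      thus "h (g A) = A" unfolding h_def g_def by (simp add: vec_eq_iff forall_3 smult_v3)
    qed
    show "\<forall>p\<in>T. g (h p) = p" unfolding g_def h_def by auto
    show "g ` Mset (v3 0 1 0) (v3 0 0 1) (v3 1 0 0) (v3 0 1 0) \<subseteq> T"
    proof
      fix p assume "p \<in> g ` Mset (v3 0 1 0) (v3 0 0 1) (v3 1 0 0) (v3 0 1 0)"
      then obtain A where A: "A \<in> Mset (v3 0 1 0) (v3 0 0 1) (v3 1 0 0) (v3 0 1 0)" "p = g A" by auto
      then obtain k k' where kk: "A$2 = k *s v3 0 0 1" "A$1 = k' *s v3 0 1 0" and n: "noeig A" unfolding Mset_def by (auto simp: e1A e2A)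
      have hA: "h (g A) = A" using kk unfolding h_def g_def by (simp add: vec_eq_iff forall_3 smult_v3)
      have "A$1 \<noteq> 0" "A$2 \<noteq> 0" using noeig_nz[OF n, of "v3 1 0 0"] noeig_nz[OF n, of "v3 0 1 0"] by (auto simp: e1A e2A v3_eq)
      hence f: "fst p \<in> Fix" using kk A(2) unfolding g_def Fix_def by (auto simp: smult_v3 v3_eq)
      have "\<forall>l. det (mat l - A) \<noteq> 0" using n noeig_det by blast
      hence "\<phi> (fst p) (snd p) \<in> rootfree" using cp[where p=p] hA A(2) unfolding rootfree_def by auto
      thus "p \<in> T" using f unfolding T_def by (cases p) auto
    qed
    show "h ` T \<subseteq> Mset (v3 0 1 0) (v3 0 0 1) (v3 1 0 0) (v3 0 1 0)"
    proof
      fix A assume "A \<in> h ` T"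
      then obtain p where p: "p \<in> T" "A = h p" by auto
      have "noeig A" using p cp[where p=p] unfolding T_def rootfree_def noeig_det by (cases p) auto
      moreover obtain s t x y z where pp: "p = ((s,t),(x,y,z))" by (metis prod.exhaust)
      moreover have "v3 0 1 0 v* A = t *s v3 0 0 1" "v3 1 0 0 v* A = s *s v3 0 1 0"
        using p(2) pp unfolding h_def by (auto simp: vec_eq_iff forall_3 vm_rows_gen)
      ultimately show "A \<in> Mset (v3 0 1 0) (v3 0 0 1) (v3 1 0 0) (v3 0 1 0)"
        unfolding Mset_def by blast
    qed
  qed
  hence "card (Mset (v3 0 1 0) (v3 0 0 1) (v3 1 0 0) (v3 0 1 0) :: ('a^3^3) set) = card T" by (rule bij_betw_same_card)
  also have "\<dots> = card Fix * card (rootfree::('a\<times>'a\<times>'a) set)" unfolding T_def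
  proof (rule count_scheme)
    show "finite Fix" by simp
    fix f assume "f \<in> Fix"
    then obtain s t where f: "f = (s,t)" "s \<noteq> 0" "t \<noteq> 0" unfolding Fix_def by auto
    show "bij (\<phi> f)"
    proof (rule o_bij[where g="\<lambda>(c0,c1,c2). (-c0/(s*t), -c1/t, -c2)"])
      show "(\<lambda>(c0,c1,c2). (-c0/(s*t), -c1/t, -c2)) \<circ> \<phi> f = id" using f unfolding \<phi>_def by (auto simp: fun_eq_iff)
      show "\<phi> f \<circ> (\<lambda>(c0,c1,c2). (-c0/(s*t), -c1/t, -c2)) = id" using f unfolding \<phi>_def by (auto simp: fun_eq_iff)
    qed
  qed
  also have "card Fix = (CARD('a) - 1)^2"
  proof -
    have "Fix = (UNIV - {0}) \<times> (UNIV - {0})" unfolding Fix_def by auto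
    thus ?thesis by (simp add: card_cartesian_product card_Diff_subset power2_eq_square)
  qed
  finally show ?thesis .
qed

lemma Mset_vec: "A \<in> Mset a b c d \<Longrightarrow> noeig A \<and> (\<exists>k. a v* A = k *s b) \<and> (\<exists>k. c v* A = k *s d)"
  unfolding Mset_def by auto

lemma NF_E:
  "card (Mset (v3 1 0 0) (v3 0 1 0) (v3 1 0 0) (v3 0 1 0) :: ('a::{field,finite}^3^3) set)
    = (CARD('a) - 1)^2 * CARD('a)^2 * card (rootfree::('a\<times>'a\<times>'a) set)"
proof -
  define S where "S = (Mset (v3 1 0 0) (v3 0 1 0) (v3 1 0 0) (v3 0 1 0) :: ('a^3^3) set)"
  define Fix where "Fix = {(s::'a,z::'a,r::'a,w::'a). s \<noteq> 0 \<and> z \<noteq> 0}"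
  define \<phi> where "\<phi> = (\<lambda>(s::'a,z::'a,r::'a,w::'a) (x::'a,y::'a,p::'a). (s*(x*w - z*p), y*w - z*r - s*x, -(y+w)))"
  define h where "h = (\<lambda>((s::'a,z::'a,r::'a,w::'a),(x::'a,y::'a,p::'a)). rows3 (v3 0 s 0) (v3 x y z) (v3 p r w))"
  define g where "g = (\<lambda>A::'a^3^3. ((A$1$2, A$2$3, A$3$2, A$3$3), (A$2$1, A$2$2, A$3$1)))"
  define T where "T = {(f,y). f \<in> Fix \<and> \<phi> f y \<in> rootfree}"
  have cp: "det (mat l - h p) = cub (\<phi> (fst p) (snd p)) l" for p l
    unfolding h_def \<phi>_def cub_def
    by (cases p) (auto simp: det_ml power2_eq_square power3_eq_cube algebra_simps)
  have hg: "h (g A) = A" if AS: "A \<in> S" for A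
  proof -
    obtain k where "v3 1 0 0 v* A = k *s v3 0 1 0" using Mset_vec[OF AS[unfolded S_def]] by blast
    thus ?thesis unfolding h_def g_def by (simp add: vec_eq_iff forall_3 vm_rows_gen)
  qed
  have "bij_betw g S T"
  proof (rule bij_betw_byWitness[where f'=h])
    show "\<forall>A\<in>S. h (g A) = A" using hg by auto
    show "\<forall>p\<in>T. g (h p) = p" unfolding g_def h_def by auto
    show "g ` S \<subseteq> T"
    proof
      fix p assume "p \<in> g ` S"
      then obtain A where A: "A \<in> S" "p = g A" by auto
      have n: "noeig A" using Mset_vec[OF A(1)[unfolded S_def]] by blast
      have hA: "h (g A) = A" using hg A by auto
      obtain k where k: "v3 1 0 0 v* A = k *s v3 0 1 0" using Mset_vec[OF A(1)[unfolded S_def]] by blast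
      have "v3 1 0 0 v* A \<noteq> 0" using noeig_nz[OF n] by simp
      hence s: "A$1$2 \<noteq> 0" using k by (auto simp: vec_eq_iff forall_3 vm_rows_gen)
      have nd: "\<forall>l. det (mat l - A) \<noteq> 0" using n noeig_det by blast
      have z: "A$2$3 \<noteq> 0"
      proof
        assume z0: "A$2$3 = 0"
        have "det (mat (A$3$3) - A) = 0" using k z0 by (simp add: det_ml vec_eq_iff forall_3 vm_rows_gen)
        thus False using nd by auto
      qed
      have f: "fst p \<in> Fix" using s z A(2) unfolding g_def Fix_def by auto
      have "\<phi> (fst p) (snd p) \<in> rootfree" using nd cp[where p=p] hA A(2) unfolding rootfree_def by auto
      thus "p \<in> T" using f unfolding T_def by (cases p) auto
    qed
    show "h ` T \<subseteq> S"
    proof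
      fix A assume "A \<in> h ` T"
      then obtain p where p: "p \<in> T" "A = h p" by auto
      have "noeig A" using p cp[where p=p] unfolding T_def rootfree_def noeig_det by (cases p) auto
      moreover obtain s z r w x y pp where pp: "p = ((s,z,r,w),(x,y,pp))" by (metis prod.exhaust)
      moreover have "v3 1 0 0 v* A = s *s v3 0 1 0"
        using p(2) pp unfolding h_def by (auto simp: vec_eq_iff forall_3 vm_rows_gen)
      ultimately show "A \<in> S" unfolding S_def Mset_def by blast
    qed
  qed
  hence "card S = card T" by (rule bij_betw_same_card)
  also have "\<dots> = card Fix * card (rootfree::('a\<times>'a\<times>'a) set)" unfolding T_def
  proof (rule count_scheme)
    show "finite Fix" by simp
    fix f assume "f \<in> Fix"
    then obtain s z r w where f: "f = (s,z,r,w)" "s \<noteq> 0" "z \<noteq> 0" unfolding Fix_def by auto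
    define inv where "inv = (\<lambda>(c0::'a,c1::'a,c2::'a). let y = -c2 - w; x = (y*w - z*r - c1)/s in (x, y, (x*w - c0/s)/z))"
    show "bij (\<phi> f)"
    proof (rule o_bij[where g=inv])
      show "inv \<circ> \<phi> f = id" using f unfolding \<phi>_def inv_def by (auto simp: fun_eq_iff Let_def field_simps)
      show "\<phi> f \<circ> inv = id" using f unfolding \<phi>_def inv_def by (auto simp: fun_eq_iff Let_def field_simps)
    qed
  qed
  also have "card Fix = (CARD('a) - 1)^2 * CARD('a)^2"
  proof -
    have "Fix = (UNIV - {0}) \<times> (UNIV - {0}) \<times> UNIV \<times> UNIV" unfolding Fix_def by auto
    thus ?thesis by (simp add: card_cartesian_product card_Diff_subset power2_eq_square)
  qed
  finally show ?thesis unfolding S_def .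
qed

lemma NF_3i:
  "card (Mset (v3 1 0 0) (v3 0 1 0) (v3 1 1 0) (v3 0 0 1) :: ('a::{field,finite}^3^3) set)
    = (CARD('a) - 1)^2 * card (rootfree::('a\<times>'a\<times>'a) set)"
proof -
  define S where "S = (Mset (v3 1 0 0) (v3 0 1 0) (v3 1 1 0) (v3 0 0 1) :: ('a^3^3) set)"
  define Fix where "Fix = {(s::'a,t::'a). s \<noteq> 0 \<and> t \<noteq> 0}"
  define \<phi> where "\<phi> = (\<lambda>(s::'a,t::'a) (x::'a,y::'a,z::'a). (-(s*t*x), -(s*z + t*y), s - z))"
  define h where "h = (\<lambda>((s::'a,t::'a),(x::'a,y::'a,z::'a)). rows3 (v3 0 s 0) (v3 0 (-s) t) (v3 x y z))"
  define g where "g = (\<lambda>A::'a^3^3. ((A$1$2, A$2$3), (A$3$1, A$3$2, A$3$3)))"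
  define T where "T = {(f,y). f \<in> Fix \<and> \<phi> f y \<in> rootfree}"
  have cp: "det (mat l - h p) = cub (\<phi> (fst p) (snd p)) l" for p l
    unfolding h_def \<phi>_def cub_def
    by (cases p) (auto simp: det_ml power2_eq_square power3_eq_cube algebra_simps)
  have hg: "h (g A) = A" if AS: "A \<in> S" for A
  proof -
    obtain k k' where "v3 1 0 0 v* A = k *s v3 0 1 0" "v3 1 1 0 v* A = k' *s v3 0 0 1" using Mset_vec[OF AS[unfolded S_def]] by blast
    thus ?thesis unfolding h_def g_def by (simp add: vec_eq_iff forall_3 vm_rows_gen) (metis minus_unique)
  qed
  have "bij_betw g S T"
  proof (rule bij_betw_byWitness[where f'=h])
    show "\<forall>A\<in>S. h (g A) = A" using hg by auto
    show "\<forall>p\<in>T. g (h p) = p" unfolding g_def h_def by auto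
    show "g ` S \<subseteq> T"
    proof
      fix p assume "p \<in> g ` S"
      then obtain A where A: "A \<in> S" "p = g A" by auto
      have n: "noeig A" using Mset_vec[OF A(1)[unfolded S_def]] by blast
      have hA: "h (g A) = A" using hg A by auto
      obtain k k' where k: "v3 1 0 0 v* A = k *s v3 0 1 0" "v3 1 1 0 v* A = k' *s v3 0 0 1" using Mset_vec[OF A(1)[unfolded S_def]] by blast
      have "v3 1 0 0 v* A \<noteq> 0" "v3 1 1 0 v* A \<noteq> 0" using noeig_nz[OF n] by simp_all
      hence s: "A$1$2 \<noteq> 0" "A$2$3 \<noteq> 0" using k by (auto simp: vec_eq_iff forall_3 vm_rows_gen)
      have nd: "\<forall>l. det (mat l - A) \<noteq> 0" using n noeig_det by blast
      have f: "fst p \<in> Fix" using s A(2) unfolding g_def Fix_def by auto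
      have "\<phi> (fst p) (snd p) \<in> rootfree" using nd cp[where p=p] hA A(2) unfolding rootfree_def by auto
      thus "p \<in> T" using f unfolding T_def by (cases p) auto
    qed
    show "h ` T \<subseteq> S"
    proof
      fix A assume "A \<in> h ` T"
      then obtain p where p: "p \<in> T" "A = h p" by auto
      have "noeig A" using p cp[where p=p] unfolding T_def rootfree_def noeig_det by (cases p) auto
      moreover obtain s t x y z where pp: "p = ((s,t),(x,y,z))" by (metis prod.exhaust)
      moreover have "v3 1 0 0 v* A = s *s v3 0 1 0" "v3 1 1 0 v* A = t *s v3 0 0 1"
        using p(2) pp unfolding h_def by (auto simp: vec_eq_iff forall_3 vm_rows_gen)
      ultimately show "A \<in> S" unfolding S_def Mset_def by blast
    qed
  qed
  hence "card S = card T" by (rule bij_betw_same_card)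
  also have "\<dots> = card Fix * card (rootfree::('a\<times>'a\<times>'a) set)" unfolding T_def
  proof (rule count_scheme)
    show "finite Fix" by simp
    fix f assume "f \<in> Fix"
    then obtain s t where f: "f = (s,t)" "s \<noteq> 0" "t \<noteq> 0" unfolding Fix_def by auto
    define inv where "inv = (\<lambda>(c0::'a,c1::'a,c2::'a). let z = s - c2 in (-c0/(s*t), (-c1 - s*z)/t, z))"
    show "bij (\<phi> f)"
    proof (rule o_bij[where g=inv])
      show "inv \<circ> \<phi> f = id" using f unfolding \<phi>_def inv_def by (auto simp: fun_eq_iff Let_def field_simps)
      show "\<phi> f \<circ> inv = id" using f unfolding \<phi>_def inv_def by (auto simp: fun_eq_iff Let_def field_simps)
    qed
  qed
  also have "card Fix = (CARD('a) - 1)^2"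
  proof -
    have "Fix = (UNIV - {0}) \<times> (UNIV - {0})" unfolding Fix_def by auto
    thus ?thesis by (simp add: card_cartesian_product card_Diff_subset power2_eq_square)
  qed
  finally show ?thesis unfolding S_def .
qed

lemma NF_3ii:
  "card (Mset (v3 1 0 0) (v3 0 1 0) (v3 0 0 1) (v3 1 1 0) :: ('a::{field,finite}^3^3) set)
    = (CARD('a) - 1)^2 * card (rootfree::('a\<times>'a\<times>'a) set)"
proof -
  define S where "S = (Mset (v3 1 0 0) (v3 0 1 0) (v3 0 0 1) (v3 1 1 0) :: ('a^3^3) set)"
  define Fix where "Fix = {(s::'a,t::'a). s \<noteq> 0 \<and> t \<noteq> 0}"
  define \<phi> where "\<phi> = (\<lambda>(s::'a,t::'a) (x::'a,y::'a,z::'a). (-(s*z*t), -(z*t + s*x), -y))"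
  define h where "h = (\<lambda>((s::'a,t::'a),(x::'a,y::'a,z::'a)). rows3 (v3 0 s 0) (v3 x y z) (v3 t t 0))"
  define g where "g = (\<lambda>A::'a^3^3. ((A$1$2, A$3$1), (A$2$1, A$2$2, A$2$3)))"
  define T where "T = {(f,y). f \<in> Fix \<and> \<phi> f y \<in> rootfree}"
  have cp: "det (mat l - h p) = cub (\<phi> (fst p) (snd p)) l" for p l
    unfolding h_def \<phi>_def cub_def
    by (cases p) (auto simp: det_ml power2_eq_square power3_eq_cube algebra_simps)
  have hg: "h (g A) = A" if AS: "A \<in> S" for A
  proof -
    obtain k k' where "v3 1 0 0 v* A = k *s v3 0 1 0" "v3 0 0 1 v* A = k' *s v3 1 1 0" using Mset_vec[OF AS[unfolded S_def]] by blast
    thus ?thesis unfolding h_def g_def by (simp add: vec_eq_iff forall_3 vm_rows_gen)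
  qed
  have "bij_betw g S T"
  proof (rule bij_betw_byWitness[where f'=h])
    show "\<forall>A\<in>S. h (g A) = A" using hg by auto
    show "\<forall>p\<in>T. g (h p) = p" unfolding g_def h_def by auto
    show "g ` S \<subseteq> T"
    proof
      fix p assume "p \<in> g ` S"
      then obtain A where A: "A \<in> S" "p = g A" by auto
      have n: "noeig A" using Mset_vec[OF A(1)[unfolded S_def]] by blast
      have hA: "h (g A) = A" using hg A by auto
      obtain k k' where k: "v3 1 0 0 v* A = k *s v3 0 1 0" "v3 0 0 1 v* A = k' *s v3 1 1 0" using Mset_vec[OF A(1)[unfolded S_def]] by blast
      have "v3 1 0 0 v* A \<noteq> 0" "v3 0 0 1 v* A \<noteq> 0" using noeig_nz[OF n] by simp_all
      hence s: "A$1$2 \<noteq> 0" "A$3$1 \<noteq> 0" using k by (auto simp: vec_eq_iff forall_3 vm_rows_gen)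
      have nd: "\<forall>l. det (mat l - A) \<noteq> 0" using n noeig_det by blast
      have f: "fst p \<in> Fix" using s A(2) unfolding g_def Fix_def by auto
      have "\<phi> (fst p) (snd p) \<in> rootfree" using nd cp[where p=p] hA A(2) unfolding rootfree_def by auto
      thus "p \<in> T" using f unfolding T_def by (cases p) auto
    qed
    show "h ` T \<subseteq> S"
    proof
      fix A assume "A \<in> h ` T"
      then obtain p where p: "p \<in> T" "A = h p" by auto
      have "noeig A" using p cp[where p=p] unfolding T_def rootfree_def noeig_det by (cases p) auto
      moreover obtain s t x y z where pp: "p = ((s,t),(x,y,z))" by (metis prod.exhaust)
      moreover have "v3 1 0 0 v* A = s *s v3 0 1 0" "v3 0 0 1 v* A = t *s v3 1 1 0"
        using p(2) pp unfolding h_def by (auto simp: vec_eq_iff forall_3 vm_rows_gen)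
      ultimately show "A \<in> S" unfolding S_def Mset_def by blast
    qed
  qed
  hence "card S = card T" by (rule bij_betw_same_card)
  also have "\<dots> = card Fix * card (rootfree::('a\<times>'a\<times>'a) set)" unfolding T_def
  proof (rule count_scheme)
    show "finite Fix" by simp
    fix f assume "f \<in> Fix"
    then obtain s t where f: "f = (s,t)" "s \<noteq> 0" "t \<noteq> 0" unfolding Fix_def by auto
    define inv where "inv = (\<lambda>(c0::'a,c1::'a,c2::'a). let z = -c0/(s*t) in ((-c1 - z*t)/s, -c2, z))"
    show "bij (\<phi> f)"
    proof (rule o_bij[where g=inv])
      show "inv \<circ> \<phi> f = id" using f unfolding \<phi>_def inv_def by (auto simp: fun_eq_iff Let_def field_simps)
      show "\<phi> f \<circ> inv = id" using f unfolding \<phi>_def inv_def by (auto simp: fun_eq_iff Let_def field_simps)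
    qed
  qed
  also have "card Fix = (CARD('a) - 1)^2"
  proof -
    have "Fix = (UNIV - {0}) \<times> (UNIV - {0})" unfolding Fix_def by auto
    thus ?thesis by (simp add: card_cartesian_product card_Diff_subset power2_eq_square)
  qed
  finally show ?thesis unfolding S_def .
qed

lemma NF_gen:
  "card (Mset (v3 1 0 0) (v3 0 1 0) (v3 0 0 1) (v3 1 1 1) :: ('a::{field,finite}^3^3) set)
    = (CARD('a) - 1) * (CARD('a) - 2) * card (rootfree::('a\<times>'a\<times>'a) set)"
proof -
  define S where "S = (Mset (v3 1 0 0) (v3 0 1 0) (v3 0 0 1) (v3 1 1 1) :: ('a^3^3) set)"
  define Fix where "Fix = {(s::'a,t::'a). s \<noteq> 0 \<and> t \<noteq> 0 \<and> s + t \<noteq> 0}"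
  define \<phi> where "\<phi> = (\<lambda>(s::'a,t::'a) (x::'a,y::'a,z::'a). (s*t*(x - z), y*t - z*t - s*x, -(y+t)))"
  define h where "h = (\<lambda>((s::'a,t::'a),(x::'a,y::'a,z::'a)). rows3 (v3 0 s 0) (v3 x y z) (v3 t t t))"
  define g where "g = (\<lambda>A::'a^3^3. ((A$1$2, A$3$1), (A$2$1, A$2$2, A$2$3)))"
  define T where "T = {(f,y). f \<in> Fix \<and> \<phi> f y \<in> rootfree}"
  have cp: "det (mat l - h p) = cub (\<phi> (fst p) (snd p)) l" for p l
    unfolding h_def \<phi>_def cub_def
    by (cases p) (auto simp: det_ml power2_eq_square power3_eq_cube algebra_simps)
  have hg: "h (g A) = A" if AS: "A \<in> S" for A
  proof -
    obtain k k' where "v3 1 0 0 v* A = k *s v3 0 1 0" "v3 0 0 1 v* A = k' *s v3 1 1 1" using Mset_vec[OF AS[unfolded S_def]] by blast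
    thus ?thesis unfolding h_def g_def by (simp add: vec_eq_iff forall_3 vm_rows_gen)
  qed
  have "bij_betw g S T"
  proof (rule bij_betw_byWitness[where f'=h])
    show "\<forall>A\<in>S. h (g A) = A" using hg by auto
    show "\<forall>p\<in>T. g (h p) = p" unfolding g_def h_def by auto
    show "g ` S \<subseteq> T"
    proof
      fix p assume "p \<in> g ` S"
      then obtain A where A: "A \<in> S" "p = g A" by auto
      have n: "noeig A" using Mset_vec[OF A(1)[unfolded S_def]] by blast
      have hA: "h (g A) = A" using hg A by auto
      obtain k k' where k: "v3 1 0 0 v* A = k *s v3 0 1 0" "v3 0 0 1 v* A = k' *s v3 1 1 1" using Mset_vec[OF A(1)[unfolded S_def]] by blast
      have "v3 1 0 0 v* A \<noteq> 0" "v3 0 0 1 v* A \<noteq> 0" using noeig_nz[OF n] by simp_all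
      hence s: "A$1$2 \<noteq> 0" "A$3$1 \<noteq> 0" using k by (auto simp: vec_eq_iff forall_3 vm_rows_gen)
      have nd: "\<forall>l. det (mat l - A) \<noteq> 0" using n noeig_det by blast
      have st: "A$1$2 + A$3$1 \<noteq> 0"
      proof
        assume z0: "A$1$2 + A$3$1 = 0"
        have "det (mat (A$3$1) - A) = 0"
        proof -
          have "A = h (g A)" using hA by simp
          hence "det (mat (A$3$1) - A) = cub (\<phi> (fst (g A)) (snd (g A))) (A$3$1)" using cp by metis
          also have "\<dots> = 0" using z0 unfolding \<phi>_def g_def cub_def
            by (simp add: eq_neg_iff_add_eq_0[symmetric] power2_eq_square power3_eq_cube algebra_simps)
          finally show ?thesis .
        qed
        thus False using nd by auto
      qed
      have f: "fst p \<in> Fix" using s st A(2) unfolding g_def Fix_def by auto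
      have "\<phi> (fst p) (snd p) \<in> rootfree" using nd cp[where p=p] hA A(2) unfolding rootfree_def by auto
      thus "p \<in> T" using f unfolding T_def by (cases p) auto
    qed
    show "h ` T \<subseteq> S"
    proof
      fix A assume "A \<in> h ` T"
      then obtain p where p: "p \<in> T" "A = h p" by auto
      have "noeig A" using p cp[where p=p] unfolding T_def rootfree_def noeig_det by (cases p) auto
      moreover obtain s t x y z where pp: "p = ((s,t),(x,y,z))" by (metis prod.exhaust)
      moreover have "v3 1 0 0 v* A = s *s v3 0 1 0" "v3 0 0 1 v* A = t *s v3 1 1 1"
        using p(2) pp unfolding h_def by (auto simp: vec_eq_iff forall_3 vm_rows_gen)
      ultimately show "A \<in> S" unfolding S_def Mset_def by blast
    qed
  qed
  hence "card S = card T" by (rule bij_betw_same_card)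
  also have "\<dots> = card Fix * card (rootfree::('a\<times>'a\<times>'a) set)" unfolding T_def
  proof (rule count_scheme)
    show "finite Fix" by simp
    fix f assume "f \<in> Fix"
    then obtain s t where f: "f = (s,t)" "s \<noteq> 0" "t \<noteq> 0" "s + t \<noteq> 0" unfolding Fix_def by auto
    define inv where "inv = (\<lambda>(c0::'a,c1::'a,c2::'a). let y = -c2 - t; m = c0/(s*t); x = (y*t + t*m - c1)/(s+t) in (x, y, x - m))"
    have nz: "s * s + s * t \<noteq> 0" "s * t + t * t \<noteq> 0" using f by (metis distrib_left mult_eq_0_iff, metis distrib_right mult_eq_0_iff)
    show "bij (\<phi> f)"
    proof (rule o_bij[where g=inv])
      show "inv \<circ> \<phi> f = id" using f nz unfolding \<phi>_def inv_def by (auto simp: fun_eq_iff Let_def field_simps)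
      show "\<phi> f \<circ> inv = id"
      proof
        fix c :: "'a\<times>'a\<times>'a"
        obtain c0 c1 c2 where c: "c = (c0,c1,c2)" by (metis prod.exhaust)
        define y where "y = -c2 - t"
        define m where "m = c0/(s*t)"
        define x where "x = (y*t + t*m - c1)/(s+t)"
        have iv: "inv c = (x, y, x - m)" unfolding inv_def c x_def m_def y_def by (simp add: Let_def)
        have e1: "s*t*(x - (x - m)) = c0" using f by (simp add: m_def)
        have e2: "(s+t)*x = y*t + t*m - c1" using f by (simp add: x_def)
        have e3: "y*t - (x-m)*t - s*x = c1" using e2 by (simp add: algebra_simps)
        have e4: "-(y+t) = c2" by (simp add: y_def)
        show "(\<phi> f \<circ> inv) c = id c" using e1 e3 e4 iv unfolding comp_def iv f(1) \<phi>_def c by simp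
      qed
    qed
  qed
  also have "card Fix = (CARD('a) - 1) * (CARD('a) - 2)"
  proof -
    have "Fix = Sigma (UNIV - {0}) (\<lambda>s. UNIV - {0, -s})" unfolding Fix_def by (auto simp: eq_neg_iff_add_eq_0 add.commute)
    moreover have "\<forall>s\<in>UNIV - {0::'a}. card (UNIV - {0, -s}) = CARD('a) - 2"
      by (auto simp: card_Diff_subset)
    ultimately show ?thesis by (simp add: card_Diff_subset numeral_2_eq_2)
  qed
  finally show ?thesis unfolding S_def .
qed

lemma inv_line_zero:
  fixes B :: "'a::field^3^3"
  assumes "B$1$3 = 0" "B$2$3 = 0"
  shows "\<not> noeig B"
proof -
  have "det (mat (B$3$3) - B) = 0" using assms by (simp add: det_ml)
  thus ?thesis using noeig_det by blast
qed

definition lin :: "'a::field^3 \<Rightarrow> ('a^3) set" where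
  "lin x = {c *s x | c. True}"

definition det3 :: "'a::field^3 \<Rightarrow> 'a^3 \<Rightarrow> 'a^3 \<Rightarrow> 'a" where
  "det3 a b c = det (rows3 a b c)"

lemma det3_formula: "det3 a b c = a$1*b$2*c$3 + a$2*b$3*c$1 + a$3*b$1*c$2 - a$1*b$3*c$2 - a$2*b$1*c$3 - a$3*b$2*c$1"
  unfolding det3_def by (rule det_rows3)

lemma rows3_inverse:
  assumes "det3 a b c \<noteq> 0"
  obtains P where "P ** rows3 a b c = mat 1" "rows3 a b c ** P = mat 1"
  using assms unfolding det3_def by (metis invertible_det_nz invertible_def)

lemma decomp3:
  assumes "det3 a b (c::'a::field^3) \<noteq> 0"
  shows "\<exists>l m n. x = l *s a + m *s b + n *s c"
proof -
  obtain P where P: "P ** rows3 a b c = mat 1" using rows3_inverse[OF assms] by blast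
  have "x = (x v* P) v* rows3 a b c" using P by (simp add: vector_matrix_mul_assoc)
  thus ?thesis by (simp add: vm_rows3) blast
qed

lemma det3_lin3: "det3 a b (l *s a + m *s b + n *s (w::'a::field^3)) = n * det3 a b w"
  unfolding det3_formula by (simp add: algebra_simps)

lemma det3_swap12: "det3 b a c = - det3 a b (c::'a::field^3)"
  unfolding det3_formula by (simp add: algebra_simps)
lemma det3_swap23: "det3 a c b = - det3 a b (c::'a::field^3)"
  unfolding det3_formula by (simp add: algebra_simps)
lemma det3_rot: "det3 b c a = det3 a b (c::'a::field^3)"
  unfolding det3_formula by (simp add: algebra_simps)

lemma lin_eq:
  assumes "x \<noteq> 0" "(y::'a::field^3) \<noteq> 0"
  shows "lin x = lin y \<longleftrightarrow> (\<exists>k. x = k *s y)"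
proof
  assume "lin x = lin y"
  moreover have "x \<in> lin x" unfolding lin_def by (auto intro!: exI[where x=1])
  ultimately show "\<exists>k. x = k *s y" unfolding lin_def by auto
next
  assume "\<exists>k. x = k *s y"
  then obtain k where k: "x = k *s y" by auto
  hence k0: "k \<noteq> 0" using assms by auto
  show "lin x = lin y"
  proof
    show "lin x \<subseteq> lin y" unfolding lin_def k by (auto simp: vector_smult_assoc)
    show "lin y \<subseteq> lin x"
    proof
      fix v assume "v \<in> lin y"
      then obtain c where "v = c *s y" unfolding lin_def by auto
      hence "v = (c/k) *s x" using k k0 by (simp add: vector_smult_assoc)
      thus "v \<in> lin x" unfolding lin_def by auto
    qed
  qed
qed

lemma indep_w:
  assumes "x \<noteq> 0" "(y::'a::field^3) \<noteq> 0" "lin x \<noteq> lin y"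
  shows "\<exists>w. det3 x y w \<noteq> 0"
proof (rule ccontr)
  assume "\<not> ?thesis"
  hence d: "det3 x y (v3 1 0 0) = 0" "det3 x y (v3 0 1 0) = 0" "det3 x y (v3 0 0 1) = 0" by auto
  hence e: "x$2*y$3 = x$3*y$2" "x$3*y$1 = x$1*y$3" "x$1*y$2 = x$2*y$1"
    unfolding det3_formula by (simp_all add: algebra_simps)
  have "\<exists>k. x = k *s y"
  proof -
    have "y$1 \<noteq> 0 \<or> y$2 \<noteq> 0 \<or> y$3 \<noteq> 0" using assms(2) by (auto simp: vec_eq_iff forall_3)
    moreover
    { assume y1: "y$1 \<noteq> 0"
      have "x = (x$1/y$1) *s y" using y1 e by (simp add: vec_eq_iff forall_3 field_simps)
      hence ?thesis by blast }
    moreover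
    { assume y2: "y$2 \<noteq> 0"
      have "x = (x$2/y$2) *s y" using y2 e by (simp add: vec_eq_iff forall_3 field_simps)
      hence ?thesis by blast }
    moreover
    { assume y3: "y$3 \<noteq> 0"
      have "x = (x$3/y$3) *s y" using y3 e by (simp add: vec_eq_iff forall_3 field_simps)
      hence ?thesis by blast }
    ultimately show ?thesis by blast
  qed
  thus False using assms lin_eq by blast
qed

lemma in_span2:
  assumes "x \<noteq> 0" "(y::'a::field^3) \<noteq> 0" "lin x \<noteq> lin y" "det3 x y z = 0"
  shows "\<exists>l m. z = l *s x + m *s y"
proof -
  obtain w where w: "det3 x y w \<noteq> 0" using indep_w[OF assms(1-3)] by blast
  obtain l m n where z: "z = l *s x + m *s y + n *s w" using decomp3[OF w] by blast
  have "n * det3 x y w = 0" using assms(4) unfolding z det3_lin3 .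
  hence "n = 0" using w by simp
  thus ?thesis using z by auto
qed

definition span2 :: "'a::field^3 \<Rightarrow> 'a^3 \<Rightarrow> ('a^3) set" where
  "span2 a b = {s *s a + t *s b | s t. True}"

lemma pg_collinear_span2: "pg_collinear (S::('a::{field,finite}^3) set set) \<longleftrightarrow> (\<exists>a b. \<forall>p\<in>S. p \<subseteq> span2 a b)"
  unfolding pg_collinear_def span2_def by simp

lemma lin_sub_span2: "lin (l *s a + m *s b) \<subseteq> span2 a (b::'a::{field,finite}^3)"
proof
  fix v assume "v \<in> lin (l *s a + m *s b)"
  then obtain c where "v = c *s (l *s a + m *s b)" unfolding lin_def by auto
  hence "v = (c*l) *s a + (c*m) *s b" by (simp add: vector_smult_assoc vector_add_ldistrib)
  thus "v \<in> span2 a b" unfolding span2_def by auto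
qed

lemma col_det:
  assumes "pg_collinear {lin a, lin b, lin (c::'a::{field,finite}^3)}"
  shows "det3 a b c = 0"
proof -
  obtain x y where xy: "\<forall>p\<in>{lin a, lin b, lin c}. p \<subseteq> span2 x y" using assms pg_collinear_span2 by blast
  have mem: "v \<in> lin v" for v :: "'a^3" unfolding lin_def by (auto intro!: exI[where x=1])
  obtain s1 t1 where a: "a = s1 *s x + t1 *s y" using xy mem[of a] unfolding span2_def by blast
  obtain s2 t2 where b: "b = s2 *s x + t2 *s y" using xy mem[of b] unfolding span2_def by blast
  obtain s3 t3 where c: "c = s3 *s x + t3 *s y" using xy mem[of c] unfolding span2_def by blast
  show ?thesis unfolding a b c det3_formula by (simp add: algebra_simps)
qed

lemma det_col:
  assumes "a \<noteq> 0" "b \<noteq> 0" "c \<noteq> 0" "det3 a b (c::'a::{field,finite}^3) = 0"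
  shows "pg_collinear {lin a, lin b, lin c}"
proof (cases "lin a = lin b")
  case True
  then obtain k where k: "b = k *s a" using lin_eq assms by metis
  have "lin a \<subseteq> span2 a c" using lin_sub_span2[of 1 a 0 c] by simp
  moreover have "lin b \<subseteq> span2 a c" using lin_sub_span2[of k a 0 c] k by simp
  moreover have "lin c \<subseteq> span2 a c" using lin_sub_span2[of 0 a 1 c] by simp
  ultimately show ?thesis unfolding pg_collinear_span2 by blast
next
  case False
  then obtain l m where c: "c = l *s a + m *s b" using in_span2 assms by blast
  have "lin a \<subseteq> span2 a b" using lin_sub_span2[of 1 a 0 b] by simp
  moreover have "lin b \<subseteq> span2 a b" using lin_sub_span2[of 0 a 1 b] by simp
  moreover have "lin c \<subseteq> span2 a b" using lin_sub_span2[of l a m b] c by simp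
  ultimately show ?thesis unfolding pg_collinear_span2 by blast
qed

lemma col3_iff:
  assumes "a \<noteq> 0" "b \<noteq> 0" "(c::'a::{field,finite}^3) \<noteq> 0"
  shows "pg_collinear {lin a, lin b, lin c} \<longleftrightarrow> det3 a b c = 0"
  using col_det det_col assms by blast

lemma col4:
  assumes "a \<noteq> 0" "b \<noteq> 0" "lin a \<noteq> lin b" "det3 a b c = 0" "det3 a b (d::'a::{field,finite}^3) = 0"
  shows "pg_collinear {lin a, lin b, lin c, lin d}"
proof -
  obtain l m where c: "c = l *s a + m *s b" using in_span2 assms by blast
  obtain l' m' where d: "d = l' *s a + m' *s b" using in_span2 assms by blast
  have "lin a \<subseteq> span2 a b" using lin_sub_span2[of 1 a 0 b] by simp
  moreover have "lin b \<subseteq> span2 a b" using lin_sub_span2[of 0 a 1 b] by simp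
  moreover have "lin c \<subseteq> span2 a b" using lin_sub_span2[of l a m b] c by simp
  moreover have "lin d \<subseteq> span2 a b" using lin_sub_span2[of l' a m' b] d by simp
  ultimately show ?thesis unfolding pg_collinear_span2 by blast
qed

lemma col_mono: "pg_collinear (S::('a::{field,finite}^3) set set) \<Longrightarrow> S' \<subseteq> S \<Longrightarrow> pg_collinear S'"
  unfolding pg_collinear_def by blast

lemma col2: "pg_collinear {lin a, lin (b::'a::{field,finite}^3)}"
proof -
  have "lin a \<subseteq> span2 a b" using lin_sub_span2[of 1 a 0 b] by simp
  moreover have "lin b \<subseteq> span2 a b" using lin_sub_span2[of 0 a 1 b] by simp
  ultimately show ?thesis unfolding pg_collinear_span2 by blast
qed

lemma pgpt: "\<alpha> \<in> pg_points \<Longrightarrow> \<exists>a. a \<noteq> 0 \<and> \<alpha> = lin a"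
  unfolding pg_points_def lin_def by auto

lemma lin_pg: "a \<noteq> 0 \<Longrightarrow> lin a \<in> pg_points"
  unfolding pg_points_def lin_def by auto

definition cls :: "'a::{field,finite}^3^3 \<Rightarrow> ('a^3^3) set" where
  "cls A = {mat_smult c A | c. c \<noteq> 0}"

lemma PGL3_cls: "PGL3 = {cls A | A. invertible A}"
  unfolding PGL3_def cls_def by simp

lemma vm_smult: "(x::'a::field^3) v* mat_smult c A = c *s (x v* A)"
  by (simp add: vec_eq_iff vector_matrix_mult_def mat_smult_def sum_distrib_left mult_ac)

lemma smult_smult: "mat_smult c (mat_smult c' A) = mat_smult (c*c') (A::'a::field^3^3)"
  by (simp add: mat_smult_def vec_eq_iff mult_ac)

lemma smult_1: "mat_smult 1 A = (A::'a::field^3^3)"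
  by (simp add: mat_smult_def vec_eq_iff)

lemma det_smult: "det (mat_smult c A) = c^3 * det (A::'a::field^3^3)"
  by (simp add: det_3 mat_smult_def power3_eq_cube algebra_simps)

lemma invertible_smult: "c \<noteq> 0 \<Longrightarrow> invertible A \<Longrightarrow> invertible (mat_smult c (A::'a::field^3^3))"
  by (simp add: invertible_det_nz det_smult)

lemma invertible_nz: "invertible M \<Longrightarrow> x \<noteq> 0 \<Longrightarrow> x v* (M::'a::field^3^3) \<noteq> 0"
proof
  assume "invertible M" "x \<noteq> 0" "x v* M = 0"
  then obtain B where "M ** B = mat 1" by (auto simp: invertible_right_inverse)
  hence "x = x v* M v* B" by (simp add: vector_matrix_mul_assoc)
  thus False using \<open>x \<noteq> 0\<close> \<open>x v* M = 0\<close> by simp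
qed

lemma noeig_smult: "c \<noteq> 0 \<Longrightarrow> noeig (mat_smult c A) \<longleftrightarrow> noeig (A::'a::field^3^3)"
proof -
  assume c: "c \<noteq> 0"
  have "(\<exists>l. x v* mat_smult c A = l *s x) \<longleftrightarrow> (\<exists>l. x v* A = l *s x)" for x
  proof
    assume "\<exists>l. x v* mat_smult c A = l *s x"
    then obtain l where "c *s (x v* A) = l *s x" by (auto simp: vm_smult)
    hence "(1/c) *s (c *s (x v* A)) = (l/c) *s x" by (simp add: vector_smult_assoc)
    thus "\<exists>l. x v* A = l *s x" using c by (auto simp: vector_smult_assoc)
  next
    assume "\<exists>l. x v* A = l *s x"
    then obtain l where "x v* A = l *s x" by auto
    thus "\<exists>l. x v* mat_smult c A = l *s x" by (auto simp: vm_smult vector_smult_assoc)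
  qed
  thus ?thesis unfolding noeig_def by blast
qed

lemma prop_smult: "(c::'a::field) \<noteq> 0 \<Longrightarrow> (\<exists>k. c *s u = k *s b) \<longleftrightarrow> (\<exists>k. u = k *s (b::'a^3))"
proof
  assume c: "c \<noteq> 0" "\<exists>k. c *s u = k *s b"
  then obtain k where "c *s u = k *s b" by auto
  hence "(1/c) *s (c *s u) = (k/c) *s b" by (simp add: vector_smult_assoc)
  thus "\<exists>k. u = k *s b" using c by (auto simp: vector_smult_assoc)
next
  assume "c \<noteq> 0" "\<exists>k. u = k *s b"
  then obtain k where "u = k *s b" by auto
  thus "\<exists>k. c *s u = k *s b" by (auto simp: vector_smult_assoc)
qed

lemma Mset_smult: "c \<noteq> 0 \<Longrightarrow> mat_smult c A \<in> Mset a b x d \<longleftrightarrow> A \<in> Mset a b x (d::'a::field^3)"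
  unfolding Mset_def by (simp add: vm_smult prop_smult noeig_smult)

lemma cls_sub: "c \<noteq> 0 \<Longrightarrow> cls (mat_smult c A) = cls A"
proof -
  assume c: "c \<noteq> 0"
  show ?thesis
  proof
    show "cls (mat_smult c A) \<subseteq> cls A"
    proof
      fix M assume "M \<in> cls (mat_smult c A)"
      then obtain c' where "c' \<noteq> 0" "M = mat_smult (c' * c) A" unfolding cls_def by (auto simp: smult_smult)
      thus "M \<in> cls A" unfolding cls_def using c by auto
    qed
    show "cls A \<subseteq> cls (mat_smult c A)"
    proof
      fix M assume "M \<in> cls A"
      then obtain c' where c': "c' \<noteq> 0" "M = mat_smult c' A" unfolding cls_def by auto
      hence "M = mat_smult (c'/c) (mat_smult c A)" using c by (simp add: smult_smult)
      thus "M \<in> cls (mat_smult c A)" unfolding cls_def using c c' by auto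
    qed
  qed
qed

lemma PGL3_rep:
  assumes "g \<in> PGL3"
  shows "(SOME M. M \<in> g) \<in> g" "g = cls (SOME M. M \<in> g)" "invertible (SOME M. M \<in> g)"
proof -
  obtain A where A: "g = cls A" "invertible A" using assms PGL3_cls by blast
  have "A \<in> g" using A smult_1[of A] unfolding cls_def by (auto intro!: exI[where x=1])
  thus M: "(SOME M. M \<in> g) \<in> g" by (rule someI)
  then obtain c where c: "c \<noteq> 0" "(SOME M. M \<in> g) = mat_smult c A" using A unfolding cls_def by auto
  show "g = cls (SOME M. M \<in> g)" using c A cls_sub by metis
  show "invertible (SOME M. M \<in> g)" using c A invertible_smult by metis
qed

lemma img_lin: "(\<lambda>x. x v* M) ` lin a = lin (a v* (M::'a::field^3^3))"
proof
  show "(\<lambda>x. x v* M) ` lin a \<subseteq> lin (a v* M)" unfolding lin_def by (auto simp: scalar_vector_matrix_assoc)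
  show "lin (a v* M) \<subseteq> (\<lambda>x. x v* M) ` lin a"
  proof
    fix v assume "v \<in> lin (a v* M)"
    then obtain c where "v = c *s (a v* M)" unfolding lin_def by auto
    hence "v = (c *s a) v* M" by (simp add: scalar_vector_matrix_assoc)
    moreover have "c *s a \<in> lin a" unfolding lin_def by auto
    ultimately show "v \<in> (\<lambda>x. x v* M) ` lin a" by auto
  qed
qed

lemma act_lin: "pgl_act (lin a) g = lin (a v* (SOME M. M \<in> g))"
  unfolding pgl_act_def by (rule img_lin)

lemma lin_eq0: "b \<noteq> 0 \<Longrightarrow> lin u = lin b \<longleftrightarrow> u \<noteq> 0 \<and> (\<exists>k. u = k *s (b::'a::field^3))"
proof -
  assume b: "b \<noteq> 0"
  have "lin 0 \<noteq> lin b"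
  proof
    assume "lin 0 = lin b"
    moreover have "b \<in> lin b" unfolding lin_def by (auto intro!: exI[where x=1])
    ultimately show False using b unfolding lin_def by auto
  qed
  thus ?thesis using lin_eq[OF _ b, of u] by auto
qed

lemma der_noeig:
  assumes "g \<in> PGL3"
  shows "derangement g \<longleftrightarrow> noeig (SOME M. M \<in> g)"
proof -
  define M where "M = (SOME M. M \<in> g)"
  have inv: "invertible M" using PGL3_rep assms M_def by auto
  have "derangement g \<longleftrightarrow> (\<forall>a. a \<noteq> 0 \<longrightarrow> lin (a v* M) \<noteq> lin a)"
    unfolding derangement_def M_def using pgpt lin_pg act_lin by metis
  also have "\<dots> \<longleftrightarrow> noeig M"
  proof
    assume h: "\<forall>a. a \<noteq> 0 \<longrightarrow> lin (a v* M) \<noteq> lin a"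
    show "noeig M" unfolding noeig_def
    proof (intro allI impI notI)
      fix x l assume x: "x \<noteq> 0" "x v* M = l *s x"
      have "x v* M \<noteq> 0" using invertible_nz[OF inv x(1)] .
      hence "lin (x v* M) = lin x" using lin_eq0[OF x(1)] x by auto
      thus False using h x by auto
    qed
  next
    assume n: "noeig M"
    show "\<forall>a. a \<noteq> 0 \<longrightarrow> lin (a v* M) \<noteq> lin a"
      using n lin_eq0 unfolding noeig_def by blast
  qed
  finally show ?thesis unfolding M_def .
qed

lemma cond_iff:
  assumes "g \<in> PGL3" "a \<noteq> 0" "b \<noteq> 0" "c \<noteq> 0" "d \<noteq> 0"
  shows "(pgl_act (lin a) g = lin b \<and> pgl_act (lin c) g = lin d \<and> derangement g) \<longleftrightarrow> g \<subseteq> Mset a b c d"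
proof -
  define M where "M = (SOME M. M \<in> g)"
  have inv: "invertible M" and gM: "g = cls M" using PGL3_rep assms M_def by auto
  have "a v* M \<noteq> 0" "c v* M \<noteq> 0" using invertible_nz inv assms by auto
  hence "(pgl_act (lin a) g = lin b \<and> pgl_act (lin c) g = lin d \<and> derangement g) \<longleftrightarrow> M \<in> Mset a b c d"
    unfolding act_lin der_noeig[OF assms(1)] M_def[symmetric] Mset_def using lin_eq0 assms by auto
  also have "\<dots> \<longleftrightarrow> g \<subseteq> Mset a b c d"
  proof
    assume "M \<in> Mset a b c d"
    thus "g \<subseteq> Mset a b c d" unfolding gM cls_def by (auto intro: Mset_smult[THEN iffD2])
  next
    assume "g \<subseteq> Mset a b c d"
    thus "M \<in> Mset a b c d" using PGL3_rep(1)[OF assms(1)] M_def by auto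
  qed
  finally show ?thesis .
qed

lemma card_cls: "invertible A \<Longrightarrow> card (cls (A::'a::{field,finite}^3^3)) = CARD('a) - 1"
proof -
  assume inv: "invertible A"
  have A0: "A \<noteq> 0" using inv invertible_nz[of A "v3 1 0 0"] by auto
  have "cls A = (\<lambda>c. mat_smult c A) ` (UNIV - {0})" unfolding cls_def by auto
  moreover have "inj_on (\<lambda>c. mat_smult c A) (UNIV - {0})"
  proof
    fix c c' assume "mat_smult c A = mat_smult c' A"
    then have "\<forall>i j. c * A$i$j = c' * A$i$j" by (auto simp: mat_smult_def vec_eq_iff)
    moreover obtain i j where "A$i$j \<noteq> 0" using A0 by (auto simp: vec_eq_iff)
    ultimately show "c = c'" by auto
  qed
  ultimately show ?thesis by (simp add: card_image card_Diff_subset)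
qed

lemma Ncount_Mset:
  fixes a b c d :: "'a::{field,finite}^3"
  assumes "a \<noteq> 0" "b \<noteq> 0" "c \<noteq> 0" "d \<noteq> 0"
  shows "card (Mset a b c d) = Ncount (lin a) (lin b) (lin c) (lin d) * (CARD('a) - 1)"
proof -
  define C where "C = {g \<in> PGL3. g \<subseteq> Mset a b c d}"
  have N: "Ncount (lin a) (lin b) (lin c) (lin d) = card C"
    unfolding Ncount_def C_def using cond_iff[OF _ assms] by (metis (lifting))
  have U: "Mset a b c d = \<Union>C"
  proof
    show "\<Union>C \<subseteq> Mset a b c d" unfolding C_def by auto
    show "Mset a b c d \<subseteq> \<Union>C"
    proof
      fix A assume A: "A \<in> Mset a b c d"
      have inv: "invertible A" using A noeig_invertible unfolding Mset_def by auto
      have "cls A \<in> PGL3" using inv PGL3_cls by auto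
      moreover have "cls A \<subseteq> Mset a b c d" using A unfolding cls_def by (auto intro: Mset_smult[THEN iffD2])
      moreover have "A \<in> cls A" unfolding cls_def using smult_1[of A] by (auto intro!: exI[where x=1])
      ultimately show "A \<in> \<Union>C" unfolding C_def by auto
    qed
  qed
  have "pairwise disjnt C"
  proof (rule pairwiseI)
    fix g g' assume g: "g \<in> C" "g' \<in> C" "g \<noteq> g'"
    show "disjnt g g'"
    proof (rule ccontr)
      assume "\<not> disjnt g g'"
      then obtain M where M: "M \<in> g" "M \<in> g'" unfolding disjnt_def by auto
      have "g \<in> PGL3" "g' \<in> PGL3" using g unfolding C_def by auto
      then obtain A A' where A: "g = cls A" and A': "g' = cls A'" unfolding PGL3_cls by blast
      obtain k where k: "k \<noteq> 0" "M = mat_smult k A" using M A unfolding cls_def by auto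
      obtain k' where k': "k' \<noteq> 0" "M = mat_smult k' A'" using M A' unfolding cls_def by auto
      have "g = cls M" using A k cls_sub by metis
      moreover have "g' = cls M" using A' k' cls_sub by metis
      ultimately show False using g by simp
    qed
  qed
  hence "card (\<Union>C) = sum card C" by (rule card_Union_disjoint) simp
  also have "\<dots> = sum (\<lambda>g. CARD('a) - 1) C"
  proof (rule sum.cong[OF refl])
    fix g assume "g \<in> C"
    hence "g \<in> PGL3" unfolding C_def by auto
    then obtain A where "g = cls A" "invertible A" unfolding PGL3_cls by blast
    thus "card g = CARD('a) - 1" using card_cls by simp
  qed
  finally show ?thesis using U N by simp
qed

abbreviation "e1 \<equiv> v3 1 0 0"
abbreviation "e2 \<equiv> v3 0 1 0"
abbreviation "e3 \<equiv> v3 0 0 1"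

lemma conj_rows:
  assumes "det3 x y (z::'a::{field,finite}^3) \<noteq> 0"
  shows "card (Mset u v s t) = card (Mset (u v* rows3 x y z) (v v* rows3 x y z) (s v* rows3 x y z) (t v* rows3 x y z))"
proof -
  obtain P where "P ** rows3 x y z = mat 1" "rows3 x y z ** P = mat 1" using rows3_inverse[OF assms] by blast
  thus ?thesis by (rule card_Mset_conj)
qed

lemma det3_scale: "det3 (l *s a) (m *s b) (n *s c) = l * m * n * det3 a b (c::'a::field^3)"
  unfolding det3_formula by (simp add: algebra_simps)

lemma card_E:
  assumes "a \<noteq> 0" "b \<noteq> 0" "lin a \<noteq> lin (b::'a::{field,finite}^3)"
  shows "card (Mset a b a b) = (CARD('a) - 1)^2 * CARD('a)^2 * card (rootfree::('a\<times>'a\<times>'a) set)"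
proof -
  obtain w where w: "det3 a b w \<noteq> 0" using indep_w[OF assms] by blast
  have "card (Mset e1 e2 e1 e2 :: ('a^3^3) set) = card (Mset a b a b)" using conj_rows[OF w, of e1 e2 e1 e2] by simp
  thus ?thesis using NF_E by metis
qed

lemma card_chain:
  assumes "det3 c a (b::'a::{field,finite}^3) \<noteq> 0"
  shows "card (Mset a b c a) = (CARD('a) - 1)^2 * card (rootfree::('a\<times>'a\<times>'a) set)"
proof -
  have "card (Mset e2 e3 e1 e2 :: ('a^3^3) set) = card (Mset a b c a)" using conj_rows[OF assms, of e2 e3 e1 e2] by simp
  thus ?thesis using NF_chain by metis
qed

lemma lin_ne_coef:
  assumes "a \<noteq> 0" "b \<noteq> 0" "lin c \<noteq> lin b" "c = l *s a + m *s (b::'a::field^3)" "c \<noteq> 0"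
  shows "l \<noteq> 0"
proof
  assume "l = 0"
  hence "c = m *s b" using assms by simp
  thus False using lin_eq assms by metis
qed

lemma card_3i:
  assumes "a \<noteq> 0" "b \<noteq> 0" "c \<noteq> 0" "d \<noteq> 0" "lin a \<noteq> lin b" "lin c \<noteq> lin a" "lin c \<noteq> lin b"
    "det3 a b c = 0" "det3 a b d \<noteq> 0"
  shows "card (Mset a b c (d::'a::{field,finite}^3)) = (CARD('a) - 1)^2 * card (rootfree::('a\<times>'a\<times>'a) set)"
proof -
  obtain l m where c: "c = l *s a + m *s b" using in_span2 assms by blast
  have l: "l \<noteq> 0" using lin_ne_coef[OF assms(1,2,7) c assms(3)] .
  have m: "m \<noteq> 0" using lin_ne_coef[OF assms(2,1,6), of m l] c assms(3) by (simp add: add.commute)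
  have D: "det3 (l *s a) (m *s b) d \<noteq> 0" using det3_scale[of l a m b 1 d] l m assms(9) by simp
  have "card (Mset e1 e2 (v3 1 1 0) e3 :: ('a^3^3) set) = card (Mset (l *s a) (m *s b) c d)"
    using conj_rows[OF D, of e1 e2 "v3 1 1 0" e3] c by simp
  also have "Mset (l *s a) (m *s b) c d = Mset a b c d" using Mset_scale[of l m 1 1 a b c d] l m by simp
  finally show ?thesis using NF_3i by metis
qed

lemma card_3ii:
  assumes "a \<noteq> 0" "b \<noteq> 0" "c \<noteq> 0" "d \<noteq> 0" "lin a \<noteq> lin b" "lin d \<noteq> lin a" "lin d \<noteq> lin b"
    "det3 a b d = 0" "det3 a b c \<noteq> 0"
  shows "card (Mset a b c (d::'a::{field,finite}^3)) = (CARD('a) - 1)^2 * card (rootfree::('a\<times>'a\<times>'a) set)"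
proof -
  obtain l m where d: "d = l *s a + m *s b" using in_span2 assms by blast
  have l: "l \<noteq> 0" using lin_ne_coef[OF assms(1,2,7) d assms(4)] .
  have m: "m \<noteq> 0" using lin_ne_coef[OF assms(2,1,6), of m l] d assms(4) by (simp add: add.commute)
  have D: "det3 (l *s a) (m *s b) c \<noteq> 0" using det3_scale[of l a m b 1 c] l m assms(9) by simp
  have "card (Mset e1 e2 e3 (v3 1 1 0) :: ('a^3^3) set) = card (Mset (l *s a) (m *s b) c d)"
    using conj_rows[OF D, of e1 e2 e3 "v3 1 1 0"] d by simp
  also have "Mset (l *s a) (m *s b) c d = Mset a b c d" using Mset_scale[of l m 1 1 a b c d] l m by simp
  finally show ?thesis using NF_3ii by metis
qed

lemma card_gen:
  assumes "det3 a b c \<noteq> 0" "det3 a b d \<noteq> 0" "det3 a c d \<noteq> 0" "det3 b c (d::'a::{field,finite}^3) \<noteq> 0"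
  shows "card (Mset a b c d) = (CARD('a) - 1) * (CARD('a) - 2) * card (rootfree::('a\<times>'a\<times>'a) set)"
proof -
  obtain l m n where d: "d = l *s a + m *s b + n *s c" using decomp3[OF assms(1)] by blast
  have "det3 a b d = n * det3 a b c" unfolding d det3_lin3 ..
  hence n: "n \<noteq> 0" using assms(2) by auto
  have "det3 b c d = l * det3 b c a" unfolding det3_formula d by (simp add: algebra_simps)
  hence l: "l \<noteq> 0" using assms(4) by auto
  have "det3 a c d = m * det3 a c b" unfolding det3_formula d by (simp add: algebra_simps)
  hence m: "m \<noteq> 0" using assms(3) by auto
  have D: "det3 (l *s a) (m *s b) (n *s c) \<noteq> 0" using det3_scale[of l a m b n c] l m n assms(1) by simp
  have "card (Mset e1 e2 e3 (v3 1 1 1) :: ('a^3^3) set) = card (Mset (l *s a) (m *s b) (n *s c) d)"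
    using conj_rows[OF D, of e1 e2 e3 "v3 1 1 1"] d by (simp add: add.assoc)
  also have "Mset (l *s a) (m *s b) (n *s c) d = Mset a b c d" using Mset_scale[of l m n 1 a b c d] l m n by simp
  finally show ?thesis using NF_gen by metis
qed

lemma Z_inv:
  assumes "x \<noteq> 0" "y \<noteq> 0" "lin x \<noteq> lin (y::'a::{field,finite}^3)"
    "\<exists>l m. x v* A = l *s x + m *s y" "\<exists>l m. y v* A = l *s x + m *s y"
  shows "\<not> noeig A"
proof
  assume n: "noeig A"
  obtain w where w: "det3 x y w \<noteq> 0" using indep_w[OF assms(1-3)] by blast
  obtain P where P: "P ** rows3 x y w = mat 1" "rows3 x y w ** P = mat 1" using rows3_inverse[OF w] by blast
  define Q where "Q = rows3 x y w"
  define B where "B = Q ** A ** P"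
  have nB: "noeig B" unfolding B_def using noeig_conj[OF n] P unfolding Q_def by blast
  have xP: "x v* P = e1" "y v* P = e2"
  proof -
    have "x = e1 v* Q" "y = e2 v* Q" unfolding Q_def by simp_all
    thus "x v* P = e1" "y v* P = e2" using P(2) unfolding Q_def[symmetric] by (simp_all add: vector_matrix_mul_assoc)
  qed
  have rowB: "e1 v* B = (x v* A) v* P" "e2 v* B = (y v* A) v* P"
    unfolding B_def Q_def by (simp_all add: vector_matrix_mul_assoc[symmetric])
  obtain l m where lm: "x v* A = l *s x + m *s y" using assms(4) by blast
  obtain l' m' where lm': "y v* A = l' *s x + m' *s y" using assms(5) by blast
  have "e1 v* B = l *s e1 + m *s e2" unfolding rowB lm
    by (simp add: vector_matrix_left_distrib scalar_vector_matrix_assoc xP)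
  hence b1: "B$1$3 = 0" by (simp add: e1A vec_eq_iff forall_3)
  have "e2 v* B = l' *s e1 + m' *s e2" unfolding rowB lm'
    by (simp add: vector_matrix_left_distrib scalar_vector_matrix_assoc xP)
  hence b2: "B$2$3 = 0" by (simp add: e2A vec_eq_iff forall_3)
  show False using inv_line_zero[OF b1 b2] nB by simp
qed

lemma Z_F:
  assumes "a \<noteq> 0" "b \<noteq> 0" "lin a \<noteq> lin (b::'a::{field,finite}^3)"
  shows "Mset a b b a = {}"
proof (rule ccontr)
  assume "Mset a b b a \<noteq> {}"
  then obtain A where A: "noeig A" "\<exists>k. a v* A = k *s b" "\<exists>k. b v* A = k *s a" unfolding Mset_def by auto
  have "\<exists>l m. a v* A = l *s a + m *s b" using A(2) by (metis add_0 vector_smult_lzero)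
  moreover have "\<exists>l m. b v* A = l *s a + m *s b" using A(3) by (metis add_0_right vector_smult_lzero)
  ultimately show False using Z_inv[OF assms] A(1) by blast
qed

lemma Z_Gc:
  assumes "a \<noteq> 0" "b \<noteq> 0" "c \<noteq> 0" "lin c \<noteq> lin a" "det3 c a (b::'a::{field,finite}^3) = 0"
  shows "Mset a b c a = {}"
proof (rule ccontr)
  assume "Mset a b c a \<noteq> {}"
  then obtain A where A: "noeig A" "\<exists>k. a v* A = k *s b" "\<exists>k. c v* A = k *s a" unfolding Mset_def by auto
  obtain l m where b: "b = l *s c + m *s a" using in_span2 assms by blast
  obtain k where k: "a v* A = k *s b" using A by blast
  have "a v* A = (k*l) *s c + (k*m) *s a" unfolding k b by (simp add: vector_add_ldistrib vector_smult_assoc)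
  hence "\<exists>l m. a v* A = l *s c + m *s a" by blast
  moreover have "\<exists>l m. c v* A = l *s c + m *s a" using A(3) by (metis add_0 vector_smult_lzero)
  ultimately show False using Z_inv[OF assms(3,1,4)] A(1) by blast
qed

lemma Z_4col:
  assumes "a \<noteq> 0" "b \<noteq> 0" "c \<noteq> 0" "d \<noteq> 0" "lin a \<noteq> lin c" "det3 a c b = 0" "det3 a c (d::'a::{field,finite}^3) = 0"
  shows "Mset a b c d = {}"
proof (rule ccontr)
  assume "Mset a b c d \<noteq> {}"
  then obtain A where A: "noeig A" "\<exists>k. a v* A = k *s b" "\<exists>k. c v* A = k *s d" unfolding Mset_def by auto
  obtain l m where b: "b = l *s a + m *s c" using in_span2 assms by blast
  obtain l' m' where d: "d = l' *s a + m' *s c" using in_span2 assms by blast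
  obtain k where k: "a v* A = k *s b" using A by blast
  obtain k' where k': "c v* A = k' *s d" using A by blast
  have "a v* A = (k*l) *s a + (k*m) *s c" unfolding k b by (simp add: vector_add_ldistrib vector_smult_assoc)
  moreover have "c v* A = (k'*l') *s a + (k'*m') *s c" unfolding k' d by (simp add: vector_add_ldistrib vector_smult_assoc)
  ultimately show False using Z_inv[OF assms(1,3,5)] A(1) by blast
qed

lemma Z_fix1:
  assumes "a \<noteq> 0" "lin a = lin (b::'a::field^3)" "b \<noteq> 0"
  shows "Mset a b c d = {}"
proof (rule ccontr)
  assume "Mset a b c d \<noteq> {}"
  then obtain A k where A: "noeig A" "a v* A = k *s b" unfolding Mset_def by auto
  obtain k' where "b = k' *s a" using lin_eq[OF assms(3,1)] assms(2) by auto
  hence "a v* A = (k*k') *s a" using A by (simp add: vector_smult_assoc)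
  thus False using A(1) assms(1) unfolding noeig_def by blast
qed

lemma Z_fix2:
  assumes "c \<noteq> 0" "lin c = lin (d::'a::field^3)" "d \<noteq> 0"
  shows "Mset a b c d = {}"
proof (rule ccontr)
  assume "Mset a b c d \<noteq> {}"
  then obtain A k where A: "noeig A" "c v* A = k *s d" unfolding Mset_def by auto
  obtain k' where "d = k' *s c" using lin_eq[OF assms(3,1)] assms(2) by auto
  hence "c v* A = (k*k') *s c" using A by (simp add: vector_smult_assoc)
  thus False using A(1) assms(1) unfolding noeig_def by blast
qed

lemma Z_D:
  assumes "a \<noteq> 0" "b \<noteq> 0" "c \<noteq> 0" "lin a \<noteq> lin c" 
  shows "Mset a b c (b::'a::field^3) = {}"
proof (rule ccontr)
  assume "Mset a b c b \<noteq> {}"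
  then obtain A k k' where A: "noeig A" "a v* A = k *s b" "c v* A = k' *s b" unfolding Mset_def by auto
  have "a v* A \<noteq> 0" "c v* A \<noteq> 0" using noeig_nz[OF A(1)] assms by auto
  hence k: "k \<noteq> 0" "k' \<noteq> 0" using A by auto
  have "(k' *s a) v* A = (k *s c) v* A" using A by (simp add: scalar_vector_matrix_assoc vector_smult_assoc mult.commute)
  hence "(k' *s a - k *s c) v* A = 0" by (simp add: vector_matrix_mult_diff_distrib)
  hence "k' *s a - k *s c = 0" using noeig_nz[OF A(1)] by blast
  hence "k' *s a = k *s c" by simp
  hence "(1/k') *s (k' *s a) = (1/k') *s (k *s c)" by simp
  hence "a = (k/k') *s c" using k by (simp add: vector_smult_assoc)
  thus False using lin_eq[OF assms(1,3)] assms(4) by auto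
qed

lemma card_ge2: "CARD('a::{field,finite}) \<ge> 2"
proof -
  have "{0::'a, 1} \<subseteq> UNIV" by simp
  hence "card {0::'a,1} \<le> CARD('a)" by (metis card_mono finite)
  thus ?thesis by simp
qed

lemma vR: "(CARD('a::{field,finite}) - 1) * CARD('a) * (CARD('a)^2 - 1) div 3 = (CARD('a) - 1) * card (rootfree::('a\<times>'a\<times>'a) set)"
  and uR: "(CARD('a) - 2) * CARD('a) * (CARD('a)^2 - 1) div 3 = (CARD('a) - 2) * card (rootfree::('a\<times>'a\<times>'a) set)"
proof -
  let ?q = "CARD('a)"
  have e: "?q * (?q^2 - 1) = 3 * card (rootfree::('a\<times>'a\<times>'a) set)"
    using card_rootfree[where 'a='a] by (simp add: diff_mult_distrib2 power2_eq_square power3_eq_cube)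
  show "(?q - 1) * ?q * (?q^2 - 1) div 3 = (?q - 1) * card (rootfree::('a\<times>'a\<times>'a) set)"
    using e by (simp add: mult.assoc)
  show "(?q - 2) * ?q * (?q^2 - 1) div 3 = (?q - 2) * card (rootfree::('a\<times>'a\<times>'a) set)"
    using e by (simp add: mult.assoc)
qed

lemma N_from_card:
  fixes a b c d :: "'a::{field,finite}^3"
  assumes "a \<noteq> 0" "b \<noteq> 0" "c \<noteq> 0" "d \<noteq> 0" "card (Mset a b c d) = (CARD('a) - 1) * X"
  shows "Ncount (lin a) (lin b) (lin c) (lin d) = X"
proof -
  have "Ncount (lin a) (lin b) (lin c) (lin d) * (CARD('a) - 1) = (CARD('a) - 1) * X"
    using Ncount_Mset[OF assms(1-4)] assms(5) by metis
  moreover have "CARD('a) - 1 > 0" using card_ge2[where 'a='a] by simp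
  ultimately show ?thesis by (metis mult.commute mult_left_cancel not_gr0)
qed

lemma N_zero:
  fixes a b c d :: "'a::{field,finite}^3"
  assumes "a \<noteq> 0" "b \<noteq> 0" "c \<noteq> 0" "d \<noteq> 0" "Mset a b c d = {}"
  shows "Ncount (lin a) (lin b) (lin c) (lin d) = 0"
  using N_from_card[OF assms(1-4), of 0] assms(5) by simp


lemma V_E:
  fixes a b :: "'a::{field,finite}^3"
  assumes "a \<noteq> 0" "b \<noteq> 0" "lin a \<noteq> lin b"
  shows "Ncount (lin a) (lin b) (lin a) (lin b) = CARD('a)^2 * ((CARD('a) - 1) * CARD('a) * (CARD('a)^2 - 1) div 3)"
  by (rule N_from_card[OF assms(1,2,1,2)]) (unfold vR, simp add: card_E[OF assms] power2_eq_square mult_ac)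

lemma V_chain:
  fixes a b c :: "'a::{field,finite}^3"
  assumes "a \<noteq> 0" "b \<noteq> 0" "c \<noteq> 0" "det3 c a b \<noteq> 0"
  shows "Ncount (lin a) (lin b) (lin c) (lin a) = (CARD('a) - 1) * CARD('a) * (CARD('a)^2 - 1) div 3"
  by (rule N_from_card[OF assms(1,2,3,1)]) (unfold vR, simp add: card_chain[OF assms(4)] power2_eq_square mult_ac)

lemma V_3i:
  fixes a b c d :: "'a::{field,finite}^3"
  assumes "a \<noteq> 0" "b \<noteq> 0" "c \<noteq> 0" "d \<noteq> 0" "lin a \<noteq> lin b" "lin c \<noteq> lin a" "lin c \<noteq> lin b"
    "det3 a b c = 0" "det3 a b d \<noteq> 0"
  shows "Ncount (lin a) (lin b) (lin c) (lin d) = (CARD('a) - 1) * CARD('a) * (CARD('a)^2 - 1) div 3"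
  by (rule N_from_card[OF assms(1-4)]) (unfold vR, simp add: card_3i[OF assms] power2_eq_square mult_ac)

lemma V_3ii:
  fixes a b c d :: "'a::{field,finite}^3"
  assumes "a \<noteq> 0" "b \<noteq> 0" "c \<noteq> 0" "d \<noteq> 0" "lin a \<noteq> lin b" "lin d \<noteq> lin a" "lin d \<noteq> lin b"
    "det3 a b d = 0" "det3 a b c \<noteq> 0"
  shows "Ncount (lin a) (lin b) (lin c) (lin d) = (CARD('a) - 1) * CARD('a) * (CARD('a)^2 - 1) div 3"
  by (rule N_from_card[OF assms(1-4)]) (unfold vR, simp add: card_3ii[OF assms] power2_eq_square mult_ac)

lemma V_gen:
  fixes a b c d :: "'a::{field,finite}^3"
  assumes "a \<noteq> 0" "b \<noteq> 0" "c \<noteq> 0" "d \<noteq> 0"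
    "det3 a b c \<noteq> 0" "det3 a b d \<noteq> 0" "det3 a c d \<noteq> 0" "det3 b c d \<noteq> 0"
  shows "Ncount (lin a) (lin b) (lin c) (lin d) = (CARD('a) - 2) * CARD('a) * (CARD('a)^2 - 1) div 3"
  by (rule N_from_card[OF assms(1-4)]) (unfold uR, simp add: card_gen[OF assms(5-8)] mult_ac)

lemma Ncount_swap: "Ncount \<alpha> \<beta> \<gamma> \<delta> = Ncount \<gamma> \<delta> \<alpha> \<beta>"
  unfolding Ncount_def by (metis (lifting))

lemma Ncount_C: "\<beta> \<noteq> \<delta> \<Longrightarrow> Ncount \<alpha> \<beta> \<alpha> \<delta> = 0"
  unfolding Ncount_def by auto

lemma main_vec:
  fixes a b c d :: "'a::{field,finite}^3"
  assumes a: "a \<noteq> 0" and b: "b \<noteq> 0" and c: "c \<noteq> 0" and d: "d \<noteq> 0"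
  defines "q \<equiv> CARD('a)"
  defines "u \<equiv> (q - 2) * q * (q^2 - 1) div 3"
  defines "v \<equiv> (q - 1) * q * (q^2 - 1) div 3"
  shows "Ncount (lin a) (lin b) (lin c) (lin d) =
    (if lin a \<noteq> lin b \<and> lin a = lin c \<and> lin b = lin d then q^2 * v
     else if distinct [lin a, lin b, lin c, lin d]
          \<and> (pg_collinear {lin a, lin b, lin c} \<or> pg_collinear {lin a, lin b, lin d}
             \<or> pg_collinear {lin a, lin c, lin d} \<or> pg_collinear {lin b, lin c, lin d})
          \<and> \<not> pg_collinear {lin a, lin b, lin c, lin d} then v
     else if (lin a = lin d \<or> lin b = lin c) \<and> \<not> pg_collinear {lin a, lin b, lin c, lin d} then v
     else if \<not> pg_collinear {lin a, lin b, lin c} \<and> \<not> pg_collinear {lin a, lin b, lin d}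
          \<and> \<not> pg_collinear {lin a, lin c, lin d} \<and> \<not> pg_collinear {lin b, lin c, lin d} then u
     else 0)"
proof -
  let ?N = "Ncount (lin a) (lin b) (lin c) (lin d)"
  let ?C4 = "pg_collinear {lin a, lin b, lin c, lin d}"
  have Cabc: "pg_collinear {lin a, lin b, lin c} \<longleftrightarrow> det3 a b c = 0" using col3_iff a b c by blast
  have Cabd: "pg_collinear {lin a, lin b, lin d} \<longleftrightarrow> det3 a b d = 0" using col3_iff a b d by blast
  have Cacd: "pg_collinear {lin a, lin c, lin d} \<longleftrightarrow> det3 a c d = 0" using col3_iff a c d by blast
  have Cbcd: "pg_collinear {lin b, lin c, lin d} \<longleftrightarrow> det3 b c d = 0" using col3_iff b c d by blast
  have r1: "det3 c d a = det3 a c d" by (rule det3_rot)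
  have r2: "det3 c d b = det3 b c d" by (rule det3_rot)
  have r3: "det3 c a b = det3 a b c" by (metis det3_rot)
  have r4: "det3 a c b = - det3 a b c" by (rule det3_swap23)
  have C4_sub: "?C4 \<Longrightarrow> pg_collinear S" if "S \<subseteq> {lin a, lin b, lin c, lin d}" for S
    using col_mono that by blast
  have B1: "?N = q^2 * v" if h: "lin a \<noteq> lin b \<and> lin a = lin c \<and> lin b = lin d"
  proof -
    have "?N = Ncount (lin a) (lin b) (lin a) (lin b)" using h by simp
    also have "\<dots> = q^2 * v" unfolding q_def v_def using V_E[OF a b] h by blast
    finally show ?thesis .
  qed
  have B2: "?N = v" if h: "distinct [lin a, lin b, lin c, lin d]
          \<and> (pg_collinear {lin a, lin b, lin c} \<or> pg_collinear {lin a, lin b, lin d}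
             \<or> pg_collinear {lin a, lin c, lin d} \<or> pg_collinear {lin b, lin c, lin d})
          \<and> \<not> ?C4"
  proof -
    have ds: "lin a \<noteq> lin b" "lin a \<noteq> lin c" "lin a \<noteq> lin d" "lin b \<noteq> lin c" "lin b \<noteq> lin d" "lin c \<noteq> lin d"
      using h by auto
    have n12: "\<not> (det3 a b c = 0 \<and> det3 a b d = 0)"
      using col4[OF a b ds(1)] h by blast
    have n34: "\<not> (det3 a c d = 0 \<and> det3 b c d = 0)"
    proof
      assume "det3 a c d = 0 \<and> det3 b c d = 0"
      hence "pg_collinear {lin c, lin d, lin a, lin b}" using col4[OF c d ds(6)] r1 r2 by simp
      moreover have "{lin c, lin d, lin a, lin b} = {lin a, lin b, lin c, lin d}" by blast
      ultimately show False using h by simp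
    qed
    have "det3 a b c = 0 \<or> det3 a b d = 0 \<or> det3 a c d = 0 \<or> det3 b c d = 0"
      using h Cabc Cabd Cacd Cbcd by blast
    moreover
    { assume z: "det3 a b c = 0"
      have ?thesis unfolding v_def q_def
        by (rule V_3i[OF a b c d ds(1)]) (use ds z n12 in auto) }
    moreover
    { assume z: "det3 a b d = 0"
      have ?thesis unfolding v_def q_def
        by (rule V_3ii[OF a b c d ds(1)]) (use ds z n12 in auto) }
    moreover
    { assume z: "det3 a c d = 0"
      have "?N = Ncount (lin c) (lin d) (lin a) (lin b)" by (rule Ncount_swap)
      also have "\<dots> = v" unfolding v_def q_def
        by (rule V_3i[OF c d a b ds(6)]) (use ds z n34 r1 r2 in auto)
      finally have ?thesis . }
    moreover
    { assume z: "det3 b c d = 0"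
      have "?N = Ncount (lin c) (lin d) (lin a) (lin b)" by (rule Ncount_swap)
      also have "\<dots> = v" unfolding v_def q_def
        by (rule V_3ii[OF c d a b ds(6)]) (use ds z n34 r1 r2 in auto)
      finally have ?thesis . }
    ultimately show ?thesis by blast
  qed
  have B3: "?N = v" if h: "(lin a = lin d \<or> lin b = lin c) \<and> \<not> ?C4"
  proof -
    { assume e: "lin a = lin d"
      have "{lin a, lin b, lin c, lin d} = {lin a, lin b, lin c}" using e by auto
      hence "det3 a b c \<noteq> 0" using h Cabc by auto
      hence "Ncount (lin a) (lin b) (lin c) (lin a) = v" unfolding v_def q_def using V_chain[OF a b c] r3 by simp
      hence ?thesis using e by simp }
    moreover
    { assume e: "lin b = lin c"
      have "{lin a, lin b, lin c, lin d} = {lin a, lin b, lin d}" using e by auto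
      hence nz: "det3 a b d \<noteq> 0" using h Cabd by auto
      have "?N = Ncount (lin c) (lin d) (lin a) (lin b)" by (rule Ncount_swap)
      also have "\<dots> = Ncount (lin b) (lin d) (lin a) (lin b)" using e by simp
      also have "\<dots> = v" unfolding v_def q_def using V_chain[OF b d a] nz by simp
      finally have ?thesis . }
    ultimately show ?thesis using h by blast
  qed
  have B4: "?N = u" if h: "\<not> pg_collinear {lin a, lin b, lin c} \<and> \<not> pg_collinear {lin a, lin b, lin d}
          \<and> \<not> pg_collinear {lin a, lin c, lin d} \<and> \<not> pg_collinear {lin b, lin c, lin d}"
    unfolding u_def q_def by (rule V_gen[OF a b c d]) (use h Cabc Cabd Cacd Cbcd in auto)
  have B5: "?N = 0" if h1: "\<not> (lin a \<noteq> lin b \<and> lin a = lin c \<and> lin b = lin d)"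
    and h2: "\<not> (distinct [lin a, lin b, lin c, lin d]
          \<and> (pg_collinear {lin a, lin b, lin c} \<or> pg_collinear {lin a, lin b, lin d}
             \<or> pg_collinear {lin a, lin c, lin d} \<or> pg_collinear {lin b, lin c, lin d})
          \<and> \<not> ?C4)"
    and h3: "\<not> ((lin a = lin d \<or> lin b = lin c) \<and> \<not> ?C4)"
    and h4: "\<not> (\<not> pg_collinear {lin a, lin b, lin c} \<and> \<not> pg_collinear {lin a, lin b, lin d}
          \<and> \<not> pg_collinear {lin a, lin c, lin d} \<and> \<not> pg_collinear {lin b, lin c, lin d})"
  proof (cases "lin a = lin b")
    case True thus ?thesis using N_zero[OF a b c d Z_fix1[OF a True b]] by simp
  next
    case nab: False
    show ?thesis
    proof (cases "lin c = lin d")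
      case True thus ?thesis using N_zero[OF a b c d Z_fix2[OF c True d]] by simp
    next
      case ncd: False
      show ?thesis
      proof (cases "lin a = lin c")
        case True
        hence "lin b \<noteq> lin d" using h1 nab by blast
        hence "Ncount (lin a) (lin b) (lin a) (lin d) = 0" by (rule Ncount_C)
        thus ?thesis using True by simp
      next
        case nac: False
        show ?thesis
        proof (cases "lin b = lin d")
          case True
          have "Ncount (lin a) (lin b) (lin c) (lin b) = 0" by (rule N_zero[OF a b c b Z_D[OF a b c nac]])
          thus ?thesis using True by simp
        next
          case nbd: False
          show ?thesis
          proof (cases "lin a = lin d")
            case ad: True
            hence C4: ?C4 using h3 by blast
            show ?thesis
            proof (cases "lin b = lin c")
              case True
              have "Ncount (lin a) (lin b) (lin b) (lin a) = 0" by (rule N_zero[OF a b b a Z_F[OF a b nab]])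
              thus ?thesis using True ad by simp
            next
              case False
              have "{lin a, lin b, lin c} \<subseteq> {lin a, lin b, lin c, lin d}" by blast
              hence "pg_collinear {lin a, lin b, lin c}" using C4_sub C4 by blast
              hence "det3 a b c = 0" using Cabc by simp
              hence z: "det3 c a b = 0" using r3 by simp
              have nca: "lin c \<noteq> lin a" using nac by auto
              have "Ncount (lin a) (lin b) (lin c) (lin a) = 0" by (rule N_zero[OF a b c a Z_Gc[OF a b c nca z]])
              thus ?thesis using ad by simp
            qed
          next
            case nad: False
            show ?thesis
            proof (cases "lin b = lin c")
              case bc: True
              hence C4: ?C4 using h3 by blast
              have "{lin a, lin b, lin d} \<subseteq> {lin a, lin b, lin c, lin d}" by blast
              hence "pg_collinear {lin a, lin b, lin d}" using C4_sub C4 by blast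
              hence z: "det3 a b d = 0" using Cabd by simp
              have "?N = Ncount (lin c) (lin d) (lin a) (lin b)" by (rule Ncount_swap)
              also have "\<dots> = Ncount (lin b) (lin d) (lin a) (lin b)" using bc by simp
              also have "\<dots> = 0" by (rule N_zero[OF b d a b Z_Gc[OF b d a nab z]])
              finally show ?thesis .
            next
              case nbc: False
              have dist: "distinct [lin a, lin b, lin c, lin d]" using nab ncd nac nbd nad nbc by simp
              have someC: "pg_collinear {lin a, lin b, lin c} \<or> pg_collinear {lin a, lin b, lin d}
                 \<or> pg_collinear {lin a, lin c, lin d} \<or> pg_collinear {lin b, lin c, lin d}" using h4 by blast
              have C4: ?C4 using h2 dist someC by blast
              have "{lin a, lin c, lin b} \<subseteq> {lin a, lin b, lin c, lin d}" by blast
              hence "pg_collinear {lin a, lin c, lin b}" using C4_sub C4 by blast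
              hence z1: "det3 a c b = 0" using col3_iff[OF a c b] by simp
              have "{lin a, lin c, lin d} \<subseteq> {lin a, lin b, lin c, lin d}" by blast
              hence "pg_collinear {lin a, lin c, lin d}" using C4_sub C4 by blast
              hence z2: "det3 a c d = 0" using Cacd by simp
              show ?thesis by (rule N_zero[OF a b c d Z_4col[OF a b c d nac z1 z2]])
            qed
          qed
        qed
      qed
    qed
  qed
  show ?thesis
    apply (split if_split, intro conjI impI)
     apply (erule B1)
    apply (split if_split, intro conjI impI)
     apply (erule B2)
    apply (split if_split, intro conjI impI)
     apply (erule B3)
    apply (split if_split, intro conjI impI)
     apply (erule B4)
    apply (rule B5; assumption)
    done
qed

theorem mainTheorem8:
  fixes \<alpha> \<beta> \<gamma> \<delta> :: "('a::{finite,field} ^ 3) set"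
  assumes "\<alpha> \<in> pg_points" "\<beta> \<in> pg_points" "\<gamma> \<in> pg_points" "\<delta> \<in> pg_points"
  defines "q \<equiv> CARD('a)"
  defines "u \<equiv> (q - 2) * q * (q^2 - 1) div 3"
  defines "v \<equiv> (q - 1) * q * (q^2 - 1) div 3"
  shows "Ncount \<alpha> \<beta> \<gamma> \<delta> =
    (if \<alpha> \<noteq> \<beta> \<and> \<alpha> = \<gamma> \<and> \<beta> = \<delta> then q^2 * v
     else if distinct [\<alpha>, \<beta>, \<gamma>, \<delta>]
          \<and> (pg_collinear {\<alpha>, \<beta>, \<gamma>} \<or> pg_collinear {\<alpha>, \<beta>, \<delta>}
             \<or> pg_collinear {\<alpha>, \<gamma>, \<delta>} \<or> pg_collinear {\<beta>, \<gamma>, \<delta>})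
          \<and> \<not> pg_collinear {\<alpha>, \<beta>, \<gamma>, \<delta>} then v
     else if (\<alpha> = \<delta> \<or> \<beta> = \<gamma>) \<and> \<not> pg_collinear {\<alpha>, \<beta>, \<gamma>, \<delta>} then v
     else if \<not> pg_collinear {\<alpha>, \<beta>, \<gamma>} \<and> \<not> pg_collinear {\<alpha>, \<beta>, \<delta>}
          \<and> \<not> pg_collinear {\<alpha>, \<gamma>, \<delta>} \<and> \<not> pg_collinear {\<beta>, \<gamma>, \<delta>} then u
     else 0)"
proof -
  obtain a where a: "a \<noteq> 0" "\<alpha> = lin a" using pgpt[OF assms(1)] by blast
  obtain b where b: "b \<noteq> 0" "\<beta> = lin b" using pgpt[OF assms(2)] by blast
  obtain c where c: "c \<noteq> 0" "\<gamma> = lin c" using pgpt[OF assms(3)] by blast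
  obtain d where d: "d \<noteq> 0" "\<delta> = lin d" using pgpt[OF assms(4)] by blast
  show ?thesis unfolding u_def v_def q_def a(2) b(2) c(2) d(2)
    by (rule main_vec[OF a(1) b(1) c(1) d(1)])
qed

end
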